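(* Let $X$ be a reflexive complex Banach space and let $a$ be a densely defined positive operator from $X$ to $X^\ast$ with $(ax,x)\ge\gamma\|x\|^2$ for all $x\in\operatorname{dom}a$, for some $\gamma>0$. Let $A_F$ be the Friedrichs extension of $a$. Then $A_F$ is the largest positive self-adjoint extension of $a$ with respect to the partial order $\ge$ defined below: that is, $A_F\ge A$ for every positive self-adjoint operator $A$ from $X$ to $X^\ast$ extending $a$.
   Context: $X^\ast$ denotes the conjugate dual of $X$ (continuous conjugate-linear functionals on $X$); $X$ is identified with $X^{\ast\ast}$. For $v\in X^\ast$, $x\in X$ write $(v,x):=v(x)$ and $(x,v):=\overline{v(x)}$. An operator $A$ from $X$ to $X^\ast$ is positive if $(Ax,x)\ge0$ for all $x\in\operatorname{dom}A$; its adjoint $A^\ast$ has domain $\{y\in X:x\mapsto(Ax,y)\text{ continuous on }\operatorname{dom}A\}$ and is determined by $(x,A^\ast y)=(Ax,y)$; $A$ is self-adjoint if $A=A^\ast$. Friedrichs extension: let $H$ be the completion of $\operatorname{dom}a$ with respect to the inner product $[x,y]:=(ax,y)$; the inclusion $\operatorname{dom}a\to X$ extends to a continuous injection $H\to X$, so $H$ is regarded as a dense subspace of $X$. $A_F$ is the operator with $\operatorname{dom}A_F=\{x\in H: y\mapsto[x,y]\text{ is continuous on }H\text{ in the norm of }X\}$ and $A_Fx$ the element $z\in X^\ast$ with $(z,y)=[x,y]$ for all $y\in H$; it is a positive self-adjoint extension of $a$. Partial order: for a positive self-adjoint $A$ from $X$ to $X^\ast$, let $H_A$ be the completion of $\operatorname{ran}A$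 with the inner product $[Ax,Ay]_A:=(Ax,y)$, let $J_A$ be the operator from $H_A$ to $X^\ast$ with $\operatorname{dom}J_A=\operatorname{ran}A$, $J_A(Ax)=Ax$, and let $J_A^\ast$ be its adjoint, i.e. the operator from $X$ to $H_A$ with $\operatorname{dom}J_A^\ast=\{y\in X:h\mapsto(J_Ah,y)\text{ continuous on }\operatorname{dom}J_A\}$ and $[h,J_A^\ast y]_A=(J_Ah,y)$. For positive self-adjoint $A,B$ one writes $A\ge B$ iff $\operatorname{dom}J_A^\ast\subseteq\operatorname{dom}J_B^\ast$ and $[J_A^\ast y,J_A^\ast y]_A\ge[J_B^\ast y,J_B^\ast y]_B$ for all $y\in\operatorname{dom}J_A^\ast$. *)

theory Defs
  imports "HOL-Analysis.Analysis"
begin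

text \<open>The complex Banach space X is modelled as a real Banach space type 'a together with
  a complex scalar multiplication sm extending the real one and compatible with the norm.\<close>

definition cplx_space :: "(complex \<Rightarrow> 'a::real_normed_vector \<Rightarrow> 'a) \<Rightarrow> bool" where
  "cplx_space sm \<longleftrightarrow>
     (\<forall>r x. sm (complex_of_real r) x = r *\<^sub>R x) \<and>
     (\<forall>c x y. sm c (x + y) = sm c x + sm c y) \<and>
     (\<forall>c d x. sm (c + d) x = sm c x + sm d x) \<and>
     (\<forall>c d x. sm c (sm d x) = sm (c * d) x) \<and>
     (\<forall>c x. norm (sm c x) = cmod c * norm x)"

definition cdual :: "(complex \<Rightarrow> 'a::real_normed_vector \<Rightarrow> 'a) \<Rightarrow> ('a \<Rightarrow> complex) set" where
  "cdual sm = {v. (\<forall>x y. v (x + y) = v x + v y) \<and> (\<forall>c x. v (sm c x) = cnj c * v x)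
                  \<and> continuous_on UNIV v}"

definition dual_norm :: "('a::real_normed_vector \<Rightarrow> complex) \<Rightarrow> real" where
  "dual_norm v = (SUP x\<in>{x. norm x \<le> 1}. cmod (v x))"

text \<open>Reflexivity: every continuous conjugate-linear functional on X* (complex structure
  (c v)(x) = c * v x, dual norm) is of the form v \<mapsto> (x,v) = cnj (v x).\<close>
definition reflexive_space :: "(complex \<Rightarrow> 'a::real_normed_vector \<Rightarrow> 'a) \<Rightarrow> bool" where
  "reflexive_space sm \<longleftrightarrow>
     (\<forall>\<Phi> :: ('a \<Rightarrow> complex) \<Rightarrow> complex.
        ((\<forall>v\<in>cdual sm. \<forall>w\<in>cdual sm. \<Phi> (\<lambda>z. v z + w z) = \<Phi> v + \<Phi> w) \<and>
         (\<forall>c. \<forall>v\<in>cdual sm. \<Phi> (\<lambda>z. c * v z) = cnj c * \<Phi> v) \<and>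
         (\<exists>K. \<forall>v\<in>cdual sm. cmod (\<Phi> v) \<le> K * dual_norm v))
        \<longrightarrow> (\<exists>x. \<forall>v\<in>cdual sm. \<Phi> v = cnj (v x)))"

text \<open>An operator from X to X*: a domain together with a map (values outside the domain
  are irrelevant). (v,x) := v x.\<close>
type_synonym 'a op = "'a set \<times> ('a \<Rightarrow> 'a \<Rightarrow> complex)"

definition odom :: "'a op \<Rightarrow> 'a set" where "odom A = fst A"
definition oapp :: "'a op \<Rightarrow> 'a \<Rightarrow> 'a \<Rightarrow> complex" where "oapp A = snd A"

definition is_op :: "(complex \<Rightarrow> 'a \<Rightarrow> 'a) \<Rightarrow> 'a::real_normed_vector op \<Rightarrow> bool" where
  "is_op sm A \<longleftrightarrow>
     0 \<in> odom A \<and> (\<forall>x\<in>odom A. \<forall>y\<in>odom A. x + y \<in> odom A) \<and>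
     (\<forall>c. \<forall>x\<in>odom A. sm c x \<in> odom A) \<and>
     (\<forall>x\<in>odom A. oapp A x \<in> cdual sm) \<and>
     (\<forall>x\<in>odom A. \<forall>y\<in>odom A. oapp A (x + y) = (\<lambda>z. oapp A x z + oapp A y z)) \<and>
     (\<forall>c. \<forall>x\<in>odom A. oapp A (sm c x) = (\<lambda>z. c * oapp A x z))"

definition op_eq :: "'a op \<Rightarrow> 'a op \<Rightarrow> bool" where
  "op_eq A B \<longleftrightarrow> odom A = odom B \<and> (\<forall>x\<in>odom A. oapp A x = oapp B x)"

definition extends :: "'a op \<Rightarrow> 'a op \<Rightarrow> bool" where
  "extends A a \<longleftrightarrow> odom a \<subseteq> odom A \<and> (\<forall>x\<in>odom a. oapp A x = oapp a x)"

definition positive_op :: "'a op \<Rightarrow> bool" where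
  "positive_op A \<longleftrightarrow> (\<forall>x\<in>odom A. Im (oapp A x x) = 0 \<and> 0 \<le> Re (oapp A x x))"

definition adj :: "(complex \<Rightarrow> 'a \<Rightarrow> 'a) \<Rightarrow> 'a::real_normed_vector op \<Rightarrow> 'a op" where
  "adj sm A = ({y. continuous_on (odom A) (\<lambda>x. oapp A x y)},
               \<lambda>y. THE z. z \<in> cdual sm \<and> (\<forall>x\<in>odom A. cnj (z x) = oapp A x y))"

definition self_adjoint :: "(complex \<Rightarrow> 'a \<Rightarrow> 'a) \<Rightarrow> 'a::real_normed_vector op \<Rightarrow> bool" where
  "self_adjoint sm A \<longleftrightarrow> op_eq A (adj sm A)"

text \<open>The completion H of dom a w.r.t. [x,y] = (ax,y) is identified
  (via the continuous injection H \<rightarrow> X) with the set of X-limits of sequences in dom a that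
  are Cauchy for the [.,.]-norm; [x,y] on H is the limit of [s n, t n].\<close>
definition fr_approx :: "'a::real_normed_vector op \<Rightarrow> 'a \<Rightarrow> (nat \<Rightarrow> 'a) \<Rightarrow> bool" where
  "fr_approx a x s \<longleftrightarrow> (\<forall>n. s n \<in> odom a) \<and>
     (\<forall>e>0. \<exists>N. \<forall>m\<ge>N. \<forall>n\<ge>N. sqrt (Re (oapp a (s m - s n) (s m - s n))) < e) \<and>
     s \<longlonglongrightarrow> x"

definition fr_H :: "'a::real_normed_vector op \<Rightarrow> 'a set" where
  "fr_H a = {x. \<exists>s. fr_approx a x s}"

definition fr_form :: "'a::real_normed_vector op \<Rightarrow> 'a \<Rightarrow> 'a \<Rightarrow> complex" where
  "fr_form a x y = lim (\<lambda>n. oapp a ((SOME s. fr_approx a x s) n) ((SOME t. fr_approx a y t) n))"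

definition friedrichs :: "(complex \<Rightarrow> 'a \<Rightarrow> 'a) \<Rightarrow> 'a::real_normed_vector op \<Rightarrow> 'a op" where
  "friedrichs sm a = ({x \<in> fr_H a. continuous_on (fr_H a) (\<lambda>y. fr_form a x y)},
                      \<lambda>x. THE z. z \<in> cdual sm \<and> (\<forall>y\<in>fr_H a. z y = fr_form a x y))"

text \<open>H_A = completion of ran A with [Ax,Ay]_A = (Ax,y); its elements are
  represented by sequences x_n in dom A with (A x_n) Cauchy in H_A.
  dom J_A* = {y. Ax \<mapsto> (Ax,y) continuous on ran A w.r.t. the H_A-norm};
  J_A* y is the element h of H_A with [Ax, h]_A = (Ax, y) for all x in dom A.\<close>
definition hA_cauchy :: "'a::real_normed_vector op \<Rightarrow> (nat \<Rightarrow> 'a) \<Rightarrow> bool" where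
  "hA_cauchy A s \<longleftrightarrow> (\<forall>n. s n \<in> odom A) \<and>
     (\<forall>e>0. \<exists>N. \<forall>m\<ge>N. \<forall>n\<ge>N. sqrt (Re (oapp A (s m - s n) (s m - s n))) < e)"

definition J_adj_dom :: "'a::real_normed_vector op \<Rightarrow> 'a set" where
  "J_adj_dom A = {y. \<forall>x0\<in>odom A. \<forall>e>0. \<exists>d>0. \<forall>x\<in>odom A.
        sqrt (Re (oapp A (x - x0) (x - x0))) < d \<longrightarrow> cmod (oapp A x y - oapp A x0 y) < e}"

definition J_adj_rep :: "'a::real_normed_vector op \<Rightarrow> 'a \<Rightarrow> (nat \<Rightarrow> 'a) \<Rightarrow> bool" where
  "J_adj_rep A y s \<longleftrightarrow> hA_cauchy A s \<and> (\<forall>x\<in>odom A. (\<lambda>n. oapp A x (s n)) \<longlonglongrightarrow> oapp A x y)"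

definition J_adj_norm2 :: "'a::real_normed_vector op \<Rightarrow> 'a \<Rightarrow> real" where
  "J_adj_norm2 A y = Re (lim (\<lambda>n. oapp A ((SOME s. J_adj_rep A y s) n) ((SOME s. J_adj_rep A y s) n)))"

definition op_ge :: "'a::real_normed_vector op \<Rightarrow> 'a op \<Rightarrow> bool" where
  "op_ge A B \<longleftrightarrow> J_adj_dom A \<subseteq> J_adj_dom B \<and>
     (\<forall>y\<in>J_adj_dom A. J_adj_norm2 A y \<ge> J_adj_norm2 B y)"

end

theory Submission imports Defs begin


definition hbP :: "'a::real_normed_vector \<Rightarrow> ('a \<times> real) set set" where
  "hbP v = {G. (0,0) \<in> G \<and> (\<forall>p\<in>G. \<forall>q\<in>G. p + q \<in> G) \<and> (\<forall>c. \<forall>p\<in>G. c *\<^sub>R p \<in> G)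
     \<and> (\<forall>r. (0,r) \<in> G \<longrightarrow> r = 0) \<and> (\<forall>p\<in>G. snd p \<le> norm (fst p))
     \<and> range (\<lambda>t. (t *\<^sub>R v, t * norm v)) \<subseteq> G}"

lemma hb_chain:
  fixes v :: "'a::real_normed_vector"
  assumes C: "C \<in> chains (hbP v)"
  shows "\<exists>U\<in>hbP v. \<forall>X\<in>C. X \<subseteq> U"
proof (cases "C = {}")
  case True
  let ?G = "range (\<lambda>t. (t *\<^sub>R v, t * norm v))"
  have "?G \<in> hbP v"
    unfolding hbP_def
  proof (intro CollectI conjI ballI allI impI)
    show "(0,0) \<in> ?G" by (rule image_eqI[of _ _ 0]) auto
    fix p q assume "p \<in> ?G" "q \<in> ?G"
    then obtain s t where "p = (s *\<^sub>R v, s * norm v)" "q = (t *\<^sub>R v, t * norm v)" by auto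
    then show "p + q \<in> ?G" by (intro image_eqI[of _ _ "s + t"]) (auto simp: algebra_simps scaleR_add_left)
  next
    fix c p assume "p \<in> ?G"
    then obtain s where "p = (s *\<^sub>R v, s * norm v)" by auto
    then show "c *\<^sub>R p \<in> ?G" by (intro image_eqI[of _ _ "c * s"]) auto
  next
    fix r assume "(0::'a, r) \<in> ?G"
    then obtain s where "0 = s *\<^sub>R v" "r = s * norm v" by auto
    then show "r = 0" by auto
  next
    fix p assume "p \<in> ?G"
    then obtain s where "p = (s *\<^sub>R v, s * norm v)" by auto
    then show "snd p \<le> norm (fst p)" by (auto intro: mult_right_mono)
  qed auto
  then show ?thesis using True by auto
next
  case False
  have sub: "C \<subseteq> hbP v" and ch: "\<forall>A\<in>C. \<forall>B\<in>C. A \<subseteq> B \<or> B \<subseteq> A"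
    using C by (auto simp: chains_def chain_subset_def)
  have "\<Union>C \<in> hbP v"
    unfolding hbP_def
  proof (intro CollectI conjI ballI allI impI)
    show "(0,0) \<in> \<Union>C" using False sub by (auto simp: hbP_def)
    fix p q assume "p \<in> \<Union>C" "q \<in> \<Union>C"
    then obtain A B where AB: "A \<in> C" "B \<in> C" "p \<in> A" "q \<in> B" by auto
    show "p + q \<in> \<Union>C"
    proof (cases "A \<subseteq> B")
      case True
      have "B \<in> hbP v" using AB sub by auto
      then have "p + q \<in> B" using AB True unfolding hbP_def by blast
      then show ?thesis using AB by blast
    next
      case False then have "B \<subseteq> A" using ch AB by blast
      have "A \<in> hbP v" using AB sub by auto
      then have "p + q \<in> A" using AB \<open>B \<subseteq> A\<close> unfolding hbP_def by blast
      then show ?thesis using AB by blast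
    qed
  next
    fix c p assume "p \<in> \<Union>C"
    then obtain X where X: "X \<in> C" "p \<in> X" by auto
    then have "X \<in> hbP v" using sub by auto
    then have "c *\<^sub>R p \<in> X" using X unfolding hbP_def by blast
    then show "c *\<^sub>R p \<in> \<Union>C" using X by blast
  next
    fix r assume "(0, r) \<in> \<Union>C"
    then obtain X where X: "X \<in> C" "(0,r) \<in> X" by auto
    then have "X \<in> hbP v" using sub by auto
    then show "r = 0" using X unfolding hbP_def by blast
  next
    fix p assume "p \<in> \<Union>C"
    then obtain X where X: "X \<in> C" "p \<in> X" by auto
    then have "X \<in> hbP v" using sub by auto
    then show "snd p \<le> norm (fst p)" using X unfolding hbP_def by blast
  next
    obtain X where X: "X \<in> C" using False by auto
    then have "X \<in> hbP v" using sub by auto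
    then show "range (\<lambda>t. (t *\<^sub>R v, t * norm v)) \<subseteq> \<Union>C" using X unfolding hbP_def by blast
  qed
  then show ?thesis by auto
qed

lemma hb_max_total:
  fixes v :: "'a::real_normed_vector"
  assumes M: "M \<in> hbP v" and mx: "\<forall>X\<in>hbP v. M \<subseteq> X \<longrightarrow> X = M"
  shows "\<forall>x. \<exists>r. (x,r) \<in> M"
proof (rule ccontr)
  assume "\<not> (\<forall>x. \<exists>r. (x,r) \<in> M)"
  then obtain w where w: "\<And>r. (w,r) \<notin> M" by auto
  have add: "p + q \<in> M" if "p \<in> M" "q \<in> M" for p q using M that by (auto simp: hbP_def)
  have scl: "c *\<^sub>R p \<in> M" if "p \<in> M" for c p using M that by (auto simp: hbP_def)
  have z: "(0,r) \<in> M \<Longrightarrow> r = 0" for r using M by (auto simp: hbP_def)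
  have bd: "p \<in> M \<Longrightarrow> snd p \<le> norm (fst p)" for p using M by (auto simp: hbP_def)
  have uniq: "r = r'" if "(x,r) \<in> M" "(x,r') \<in> M" for x r r'
  proof -
    have "(x,r) + (-1) *\<^sub>R (x,r') \<in> M" using add scl that by blast
    then have "(0, r - r') \<in> M" by simp
    then show ?thesis using z by fastforce
  qed
  define S1 where "S1 = {r - norm (x - w) | x r. (x,r) \<in> M}"
  have m0: "(0,0) \<in> M" using M by (auto simp: hbP_def)
  have key: "r - norm (x - w) \<le> norm (y + w) - r'" if "(x,r) \<in> M" "(y,r') \<in> M" for x r y r'
  proof -
    have "(x + y, r + r') \<in> M" using add[OF that] by simp
    then have "r + r' \<le> norm (x + y)" using bd by fastforce
    also have "x + y = (x - w) + (y + w)" by simp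
    also have "norm ((x - w) + (y + w)) \<le> norm (x - w) + norm (y + w)" by (rule norm_triangle_ineq)
    finally show ?thesis by simp
  qed
  define S1 where "S1 = {r - norm (x - w) | x r. (x,r) \<in> M}"
  define c where "c = Sup S1"
  have S1ne: "S1 \<noteq> {}" using m0 unfolding S1_def by blast
  have S1bd: "bdd_above S1" unfolding S1_def bdd_above_def using key[OF _ m0] by auto
  have c1: "r - norm (x - w) \<le> c" if "(x,r) \<in> M" for x r
    unfolding c_def by (rule cSup_upper[OF _ S1bd]) (use that S1_def in blast)
  have c2: "c \<le> norm (y + w) - r'" if "(y,r') \<in> M" for y r'
    unfolding c_def by (rule cSup_least[OF S1ne]) (use key that S1_def in blast)
  define M' where "M' = {(x + t *\<^sub>R w, r + t * c) | x r t. (x,r) \<in> M}"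
  have "M' \<in> hbP v"
    unfolding hbP_def
  proof (intro CollectI conjI ballI allI impI)
    show "(0,0) \<in> M'" unfolding M'_def using m0 by force
    fix p q assume "p \<in> M'" "q \<in> M'"
    then obtain x r t y r' t' where p: "p = (x + t *\<^sub>R w, r + t * c)" "(x,r) \<in> M"
      and q: "q = (y + t' *\<^sub>R w, r' + t' * c)" "(y,r') \<in> M" unfolding M'_def by blast
    have "(x + y, r + r') \<in> M" using add[OF p(2) q(2)] by simp
    moreover have "p + q = ((x + y) + (t + t') *\<^sub>R w, (r + r') + (t + t') * c)"
      using p q by (simp add: algebra_simps scaleR_add_left)
    ultimately show "p + q \<in> M'" unfolding M'_def by blast
  next
    fix k p assume "p \<in> M'"
    then obtain x r t where p: "p = (x + t *\<^sub>R w, r + t * c)" "(x,r) \<in> M" unfolding M'_def by blast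
    have "(k *\<^sub>R x, k * r) \<in> M" using scl[OF p(2), of k] by simp
    moreover have "k *\<^sub>R p = (k *\<^sub>R x + (k * t) *\<^sub>R w, k * r + (k * t) * c)"
      using p by (simp add: algebra_simps)
    ultimately show "k *\<^sub>R p \<in> M'" unfolding M'_def by blast
  next
    fix r0 assume "(0, r0) \<in> M'"
    then obtain x r t where p: "0 = x + t *\<^sub>R w" "r0 = r + t * c" "(x,r) \<in> M" unfolding M'_def by blast
    have "t = 0"
    proof (rule ccontr)
      assume t: "t \<noteq> 0"
      have "((- 1 / t) *\<^sub>R x, (- 1 / t) * r) \<in> M" using scl[OF p(3), of "-1/t"] by simp
      moreover have "(- 1 / t) *\<^sub>R x = w"
      proof -
        have "x = - (t *\<^sub>R w)" using p(1) by (simp add: eq_neg_iff_add_eq_0)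
        then show ?thesis using t by simp
      qed
      ultimately show False using w by auto
    qed
    then have "x = 0" using p by simp
    then show "r0 = 0" using p \<open>t = 0\<close> z by simp
  next
    fix p assume "p \<in> M'"
    then obtain x r t where p: "p = (x + t *\<^sub>R w, r + t * c)" "(x,r) \<in> M" unfolding M'_def by blast
    show "snd p \<le> norm (fst p)"
    proof (cases "t = 0")
      case True then show ?thesis using p bd by fastforce
    next
      case False
      show ?thesis
      proof (cases "t > 0")
        case True
        have m: "((1/t) *\<^sub>R x, (1/t) * r) \<in> M" using scl[OF p(2), of "1/t"] by simp
        have "c \<le> norm ((1/t) *\<^sub>R x + w) - (1/t) * r" by (rule c2[OF m])
        then have "t * c \<le> t * (norm ((1/t) *\<^sub>R x + w) - (1/t) * r)" using True by simp
        also have "\<dots> = norm (t *\<^sub>R ((1/t) *\<^sub>R x + w)) - r" using True by (simp add: right_diff_distrib)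
        also have "t *\<^sub>R ((1/t) *\<^sub>R x + w) = x + t *\<^sub>R w" using True by (simp add: scaleR_add_right)
        finally show ?thesis using p by simp
      next
        case False
        with \<open>t \<noteq> 0\<close> have tn: "t < 0" by simp
        define s where "s = - t"
        have s: "s > 0" using tn s_def by simp
        have m: "((1/s) *\<^sub>R x, (1/s) * r) \<in> M" using scl[OF p(2), of "1/s"] by simp
        have "(1/s) * r - norm ((1/s) *\<^sub>R x - w) \<le> c" by (rule c1[OF m])
        then have "s * ((1/s) * r - norm ((1/s) *\<^sub>R x - w)) \<le> s * c" using s by simp
        then have "r - norm (s *\<^sub>R ((1/s) *\<^sub>R x - w)) \<le> s * c" using s by (simp add: right_diff_distrib)
        also have "s *\<^sub>R ((1/s) *\<^sub>R x - w) = x + t *\<^sub>R w" using s s_def by (simp add: scaleR_diff_right)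
        finally show ?thesis using p s_def by simp
      qed
    qed
  next
    have "range (\<lambda>t. (t *\<^sub>R v, t * norm v)) \<subseteq> M" using M by (auto simp: hbP_def)
    moreover have "M \<subseteq> M'" unfolding M'_def by (force intro: exI[of _ 0])
    ultimately show "range (\<lambda>t. (t *\<^sub>R v, t * norm v)) \<subseteq> M'" by blast
  qed
  moreover have "M \<subseteq> M'" unfolding M'_def by (force intro: exI[of _ 0])
  moreover have "(w, c) \<in> M'" unfolding M'_def using m0 by (force intro: exI[of _ 1])
  ultimately show False using mx w by blast
qed

lemma hahn_banach_real:
  fixes v :: "'a::real_normed_vector"
  shows "\<exists>g. (\<forall>x y. g (x + y) = g x + g y) \<and> (\<forall>r x. g (r *\<^sub>R x) = r * g x) \<and>
             (\<forall>x. \<bar>g x\<bar> \<le> norm x) \<and> g v = norm v"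
proof -
  obtain M where M: "M \<in> hbP v" and mx: "\<forall>X\<in>hbP v. M \<subseteq> X \<longrightarrow> X = M"
    using Zorn_Lemma2[of "hbP v"] hb_chain by blast
  have tot: "\<forall>x. \<exists>r. (x,r) \<in> M" by (rule hb_max_total[OF M mx])
  have add: "p + q \<in> M" if "p \<in> M" "q \<in> M" for p q using M that by (auto simp: hbP_def)
  have scl: "c *\<^sub>R p \<in> M" if "p \<in> M" for c p using M that by (auto simp: hbP_def)
  have z: "(0,r) \<in> M \<Longrightarrow> r = 0" for r using M by (auto simp: hbP_def)
  have bd: "p \<in> M \<Longrightarrow> snd p \<le> norm (fst p)" for p using M by (auto simp: hbP_def)
  have uniq: "r = r'" if "(x,r) \<in> M" "(x,r') \<in> M" for x r r'
  proof -
    have "(x,r) + (-1) *\<^sub>R (x,r') \<in> M" using add scl that by blast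
    then have "(0, r - r') \<in> M" by simp
    then show ?thesis using z by fastforce
  qed
  define g where "g x = (THE r. (x,r) \<in> M)" for x
  have gM: "(x, g x) \<in> M" for x
    unfolding g_def using tot uniq by (metis theI)
  have gI: "g x = r" if "(x,r) \<in> M" for x r using uniq gM that by blast
  have ga: "g (x + y) = g x + g y" for x y
    using gI add[OF gM[of x] gM[of y]] by simp
  have gs: "g (r *\<^sub>R x) = r * g x" for r x
    using gI scl[OF gM[of x], of r] by simp
  have gb: "g x \<le> norm x" for x using bd[OF gM[of x]] by simp
  have "\<bar>g x\<bar> \<le> norm x" for x
  proof -
    have "g (-x) \<le> norm x" using gb[of "-x"] by simp
    moreover have "g (-x) = - g x" using gs[of "-1" x] by simp
    ultimately show ?thesis using gb[of x] by linarith
  qed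
  moreover have "g v = norm v"
  proof -
    have "(1 *\<^sub>R v, 1 * norm v) \<in> range (\<lambda>t. (t *\<^sub>R v, t * norm v))" by blast
    then have "(1 *\<^sub>R v, 1 * norm v) \<in> M" using M by (auto simp: hbP_def)
    then show ?thesis using gI by simp
  qed
  ultimately show ?thesis using ga gs by blast
qed



section \<open>Complex structure\<close>

locale cplx =
  fixes sm :: "complex \<Rightarrow> 'a::real_normed_vector \<Rightarrow> 'a"
  assumes cs: "cplx_space sm"
begin

lemma sm_real: "sm (complex_of_real r) x = r *\<^sub>R x" using cs by (simp add: cplx_space_def)
lemma sm_add: "sm c (x + y) = sm c x + sm c y" using cs by (simp add: cplx_space_def)
lemma sm_addc: "sm (c + d) x = sm c x + sm d x" using cs by (simp add: cplx_space_def)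
lemma sm_assoc: "sm c (sm d x) = sm (c * d) x" using cs by (simp add: cplx_space_def)
lemma sm_norm: "norm (sm c x) = cmod c * norm x" using cs by (simp add: cplx_space_def)
lemma sm_zero[simp]: "sm c 0 = 0"
  using sm_add[of c 0 0] by simp
lemma sm_0[simp]: "sm 0 x = 0" using sm_real[of 0 x] by simp
lemma sm_1[simp]: "sm 1 x = x" using sm_real[of 1 x] by simp
lemma sm_m1: "sm (-1) x = - x" using sm_real[of "-1" x] by simp
lemma sm_neg: "sm c (- x) = - sm c x"
  using sm_add[of c x "-x"] by (simp add: eq_neg_iff_add_eq_0 add.commute)
lemma sm_diff: "sm c (x - y) = sm c x - sm c y"
  using sm_add[of c x "-y"] sm_neg by simp
lemma sm_scaleR: "sm c (r *\<^sub>R x) = r *\<^sub>R sm c x"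
  by (metis sm_real sm_assoc mult.commute)

lemma cdualD:
  assumes "v \<in> cdual sm"
  shows "v (x + y) = v x + v y" "v (sm c x) = cnj c * v x" "continuous_on UNIV v"
  using assms by (auto simp: cdual_def)

lemma cdual_0: "v \<in> cdual sm \<Longrightarrow> v 0 = 0"
  using cdualD(1)[of v 0 0] by simp
lemma cdual_neg: "v \<in> cdual sm \<Longrightarrow> v (- x) = - v x"
  using cdualD(1)[of v x "-x"] cdual_0[of v] by (simp add: eq_neg_iff_add_eq_0 add.commute)
lemma cdual_diff: "v \<in> cdual sm \<Longrightarrow> v (x - y) = v x - v y"
  using cdualD(1)[of v x "-y"] cdual_neg[of v y] by simp
lemma cdual_scaleR: "v \<in> cdual sm \<Longrightarrow> v (r *\<^sub>R x) = complex_of_real r * v x"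
  using cdualD(2)[of v "complex_of_real r" x] by (simp add: sm_real)
lemma cdual_tendsto: "v \<in> cdual sm \<Longrightarrow> (s \<longlonglongrightarrow> x) \<Longrightarrow> (\<lambda>n. v (s n)) \<longlonglongrightarrow> v x"
  using cdualD(3)[of v] by (metis continuous_on_tendsto_compose UNIV_I eventually_sequentially)

end

lemma bound_from_small:
  fixes \<phi> :: "'a::real_vector \<Rightarrow> complex" and p :: "'a \<Rightarrow> real"
  assumes sc: "\<And>x r. x \<in> S \<Longrightarrow> r *\<^sub>R x \<in> S"
    and ph: "\<And>x r. x \<in> S \<Longrightarrow> \<phi> (r *\<^sub>R x) = complex_of_real r * \<phi> x"
    and pp: "\<And>x r. x \<in> S \<Longrightarrow> p (r *\<^sub>R x) = \<bar>r\<bar> * p x"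
    and p0: "\<And>x. x \<in> S \<Longrightarrow> p x \<ge> 0"
    and d: "d > 0" and sm: "\<And>x. x \<in> S \<Longrightarrow> p x < d \<Longrightarrow> cmod (\<phi> x) < 1"
  shows "\<exists>K. \<forall>x\<in>S. cmod (\<phi> x) \<le> K * p x"
proof (intro exI ballI)
  fix x assume x: "x \<in> S"
  show "cmod (\<phi> x) \<le> (2 / d) * p x"
  proof (cases "p x = 0")
    case True
    show ?thesis
    proof (rule ccontr)
      assume "\<not> ?thesis"
      then have nz: "cmod (\<phi> x) > 0" using True by simp
      define r where "r = 2 / cmod (\<phi> x)"
      have "p (r *\<^sub>R x) = 0" using pp[OF x] True by simp
      then have "cmod (\<phi> (r *\<^sub>R x)) < 1" using sm[OF sc[OF x]] d by simp
      moreover have "cmod (\<phi> (r *\<^sub>R x)) = 2" using ph[OF x, of r] nz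
        by (simp add: r_def norm_mult norm_divide)
      ultimately show False by simp
    qed
  next
    case False
    then have px: "p x > 0" using p0[OF x] by simp
    define r where "r = d / (2 * p x)"
    have r: "r > 0" using px d r_def by simp
    have "p (r *\<^sub>R x) = d / 2" using pp[OF x, of r] r px d by (simp add: r_def)
    then have "cmod (\<phi> (r *\<^sub>R x)) < 1" using sm[OF sc[OF x]] d by simp
    then have "r * cmod (\<phi> x) < 1" using ph[OF x, of r] r by (simp add: norm_mult)
    then have "cmod (\<phi> x) < 1 / r" using r by (simp add: field_simps)
    also have "1 / r = (2 / d) * p x" using r_def d px by simp
    finally show ?thesis by simp
  qed
qed

context cplx begin

lemma cdual_bounded:
  assumes v: "v \<in> cdual sm"
  shows "\<exists>K. \<forall>x. cmod (v x) \<le> K * norm x"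
proof -
  have "continuous (at 0) v" using cdualD(3)[OF v] by (simp add: continuous_on_eq_continuous_at)
  then obtain d where d: "d > 0" "\<And>x. dist x 0 < d \<Longrightarrow> dist (v x) (v 0) < 1"
    unfolding continuous_at_eps_delta by (meson zero_less_one)
  have "\<exists>K. \<forall>x\<in>UNIV. cmod (v x) \<le> K * norm x"
    by (rule bound_from_small[where d=d]) (use d cdual_0[OF v] cdual_scaleR[OF v] in auto)
  then show ?thesis by auto
qed

lemma hahn_banach_cplx:
  assumes "w \<noteq> 0"
  shows "\<exists>f\<in>cdual sm. f w \<noteq> 0"
proof -
  obtain g where ga: "\<And>x y. g (x + y) = g x + g y" and gs: "\<And>r x. g (r *\<^sub>R x) = r * g x"
    and gb: "\<And>x. \<bar>g x\<bar> \<le> norm x" and gv: "g w = norm w"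
    using hahn_banach_real[of w] by blast
  define f where "f x = complex_of_real (g x) + \<i> * complex_of_real (g (sm \<i> x))" for x
  have fa: "f (x + y) = f x + f y" for x y by (simp add: f_def ga sm_add algebra_simps)
  have fs: "f (r *\<^sub>R x) = complex_of_real r * f x" for r x
    by (simp add: f_def gs sm_scaleR algebra_simps)
  have fi: "f (sm \<i> x) = - \<i> * f x" for x
  proof -
    have "sm \<i> (sm \<i> x) = - x" using sm_assoc[of \<i> \<i> x] sm_m1 by simp
    moreover have "g (- x) = - g x" using gs[of "-1" x] by simp
    ultimately show ?thesis by (simp add: f_def algebra_simps)
  qed
  have fn: "f (- x) = - f x" for x using fs[of "-1" x] by simp
  have fc: "f (sm c x) = cnj c * f x" for c x
  proof -
    have "c = complex_of_real (Re c) + complex_of_real (Im c) * \<i>" by (simp add: complex_eq_iff)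
    then have "sm c x = Re c *\<^sub>R x + Im c *\<^sub>R sm \<i> x"
      by (metis sm_addc sm_assoc sm_real)
    then have "f (sm c x) = Re c * f x + Im c * (- \<i> * f x)" by (simp add: fa fs fi)
    also have "\<dots> = cnj c * f x" by (simp add: complex_eq_iff algebra_simps)
    finally show ?thesis .
  qed
  have fb: "cmod (f x) \<le> 2 * norm x" for x
  proof -
    have "cmod (f x) \<le> \<bar>g x\<bar> + \<bar>g (sm \<i> x)\<bar>" unfolding f_def
      by (metis norm_triangle_ineq norm_of_real norm_mult norm_ii mult_1)
    also have "\<dots> \<le> norm x + norm (sm \<i> x)" using gb by (intro add_mono) auto
    also have "norm (sm \<i> x) = norm x" by (simp add: sm_norm)
    finally show ?thesis by simp
  qed
  have "continuous_on UNIV f"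
    unfolding continuous_on_iff
  proof (intro ballI allI impI)
    fix x e assume "(e::real) > 0"
    show "\<exists>d>0. \<forall>x'\<in>UNIV. dist x' x < d \<longrightarrow> dist (f x') (f x) < e"
    proof (intro exI[of _ "e/2"] conjI ballI impI)
      fix x' assume "dist x' x < e / 2"
      have "f x' - f x = f (x' - x)" using fa[of "x' - x" x] by simp
      then have "dist (f x') (f x) \<le> 2 * norm (x' - x)" using fb by (simp add: dist_norm)
      then show "dist (f x') (f x) < e" using \<open>dist x' x < e/2\<close> by (simp add: dist_norm)
    qed (use \<open>e > 0\<close> in auto)
  qed
  then have "f \<in> cdual sm" unfolding cdual_def using fa fc by auto
  moreover have "Re (f w) = norm w" by (simp add: f_def gv)
  then have "f w \<noteq> 0" using assms by auto
  ultimately show ?thesis by blast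
qed

lemma cdual_separate:
  assumes "\<And>f. f \<in> cdual sm \<Longrightarrow> f x = f y" shows "x = y"
proof (rule ccontr)
  assume "x \<noteq> y"
  then obtain f where f: "f \<in> cdual sm" "f (x - y) \<noteq> 0" using hahn_banach_cplx[of "x - y"] by auto
  then show False using assms[OF f(1)] cdual_diff[OF f(1)] by simp
qed

lemma cdual_unique_dense:
  assumes "closure S = UNIV" "v \<in> cdual sm" "w \<in> cdual sm" "\<And>x. x \<in> S \<Longrightarrow> v x = w x"
  shows "v = w"
proof
  fix x
  have "x \<in> closure S" using assms by simp
  then obtain s where s: "\<And>n. s n \<in> S" "s \<longlonglongrightarrow> x" unfolding closure_sequential by blast
  have "(\<lambda>n. v (s n)) \<longlonglongrightarrow> v x" by (rule cdual_tendsto[OF assms(2) s(2)])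
  moreover have "(\<lambda>n. v (s n)) \<longlonglongrightarrow> w x"
    using cdual_tendsto[OF assms(3) s(2)] assms(4)[OF s(1)] by simp
  ultimately show "v x = w x" using LIMSEQ_unique by blast
qed

end


lemma quad_disc:
  fixes A B C :: real
  assumes "\<And>t. 0 \<le> A - 2 * t * B + t * t * B * C" "B \<ge> 0" "C \<ge> 0" "A \<ge> 0"
  shows "B \<le> A * C"
proof (cases "B = 0")
  case True then show ?thesis using assms by simp
next
  case False
  then have B: "B > 0" using assms by simp
  show ?thesis
  proof (cases "C = 0")
    case True
    have "0 \<le> A - 2 * ((A + 1) / (2 * B)) * B" using assms(1)[of "(A+1)/(2*B)"] True by simp
    also have "\<dots> = -1" using B by (simp add: field_simps)
    finally show ?thesis by simp
  next
    case False
    then have C: "C > 0" using assms by simp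
    have "0 \<le> A - 2 * (1/C) * B + (1/C) * (1/C) * B * C" by (rule assms(1))
    also have "\<dots> = A - B / C" using C by (simp add: field_simps)
    finally show ?thesis using C by (simp add: field_simps)
  qed
qed

locale posop = cplx sm for sm :: "complex \<Rightarrow> 'a::real_normed_vector \<Rightarrow> 'a" +
  fixes T :: "'a op"
  assumes op: "is_op sm T" and pos: "positive_op T"
begin

abbreviation "DT \<equiv> odom T"
abbreviation "ap \<equiv> oapp T"
definition "nT x = sqrt (Re (ap x x))"

lemma dom0[simp]: "0 \<in> DT" using op by (simp add: is_op_def)
lemma dom_add: "x \<in> DT \<Longrightarrow> y \<in> DT \<Longrightarrow> x + y \<in> DT" using op by (simp add: is_op_def)
lemma dom_sm: "x \<in> DT \<Longrightarrow> sm c x \<in> DT" using op by (simp add: is_op_def)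
lemma dom_neg: "x \<in> DT \<Longrightarrow> - x \<in> DT" using dom_sm[of x "-1"] sm_m1 by simp
lemma dom_diff: "x \<in> DT \<Longrightarrow> y \<in> DT \<Longrightarrow> x - y \<in> DT" using dom_add[of x "-y"] dom_neg by simp
lemma dom_scaleR: "x \<in> DT \<Longrightarrow> r *\<^sub>R x \<in> DT" using dom_sm[of x "complex_of_real r"] sm_real by simp
lemma ap_cdual: "x \<in> DT \<Longrightarrow> ap x \<in> cdual sm" using op by (simp add: is_op_def)
lemma ap_add: "x \<in> DT \<Longrightarrow> y \<in> DT \<Longrightarrow> ap (x + y) z = ap x z + ap y z"
  using op by (simp add: is_op_def)
lemma ap_sm: "x \<in> DT \<Longrightarrow> ap (sm c x) z = c * ap x z"
  using op by (simp add: is_op_def)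
lemma ap_neg: "x \<in> DT \<Longrightarrow> ap (- x) z = - ap x z" using ap_sm[of x "-1"] sm_m1 by simp
lemma ap_diff: "x \<in> DT \<Longrightarrow> y \<in> DT \<Longrightarrow> ap (x - y) z = ap x z - ap y z"
  using ap_add[of x "-y"] ap_neg dom_neg by simp
lemma ap_scaleR: "x \<in> DT \<Longrightarrow> ap (r *\<^sub>R x) z = complex_of_real r * ap x z"
  using ap_sm[of x "complex_of_real r"] sm_real by simp
lemma ap_0: "ap 0 = (\<lambda>z. 0)" by (rule ext) (use ap_sm[of 0 0] in simp)
lemma ap_0': "ap 0 z = 0" using ap_0 by simp
lemma ap2_add: "x \<in> DT \<Longrightarrow> ap x (y + z) = ap x y + ap x z" using cdualD(1)[OF ap_cdual] by blast
lemma ap2_sm: "x \<in> DT \<Longrightarrow> ap x (sm c y) = cnj c * ap x y" using cdualD(2)[OF ap_cdual] by blast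
lemma ap2_neg: "x \<in> DT \<Longrightarrow> ap x (- y) = - ap x y" using cdual_neg[OF ap_cdual] by blast
lemma ap2_diff: "x \<in> DT \<Longrightarrow> ap x (y - z) = ap x y - ap x z" using cdual_diff[OF ap_cdual] by blast
lemma ap2_scaleR: "x \<in> DT \<Longrightarrow> ap x (r *\<^sub>R y) = complex_of_real r * ap x y" using cdual_scaleR[OF ap_cdual] by blast
lemma ap2_0: "x \<in> DT \<Longrightarrow> ap x 0 = 0" using cdual_0[OF ap_cdual] by blast
lemma ap2_tendsto: "x \<in> DT \<Longrightarrow> s \<longlonglongrightarrow> y \<Longrightarrow> (\<lambda>n. ap x (s n)) \<longlonglongrightarrow> ap x y"
  using cdual_tendsto[OF ap_cdual] by blast

lemma Im_diag: assumes "x \<in> DT" shows "Im (ap x x) = 0" using pos assms unfolding positive_op_def by blast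
lemma Re_diag: assumes "x \<in> DT" shows "Re (ap x x) \<ge> 0" using pos assms unfolding positive_op_def by blast
lemma diag_real: "x \<in> DT \<Longrightarrow> ap x x = complex_of_real (Re (ap x x))"
  using Im_diag by (simp add: complex_eq_iff)

lemma expand: "x \<in> DT \<Longrightarrow> y \<in> DT \<Longrightarrow> ap (x + y) (x + y) = ap x x + ap x y + ap y x + ap y y"
  by (simp add: ap_add ap2_add)

lemma herm:
  assumes x: "x \<in> DT" and y: "y \<in> DT"
  shows "ap y x = cnj (ap x y)"
proof -
  have "Im (ap (x + y) (x + y)) = 0" using Im_diag dom_add x y by blast
  then have i1: "Im (ap x y) + Im (ap y x) = 0" using expand[OF x y] Im_diag[OF x] Im_diag[OF y] by simp
  have iy: "sm \<i> y \<in> DT" using dom_sm y by blast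
  have "Im (ap (x + sm \<i> y) (x + sm \<i> y)) = 0" using Im_diag dom_add x iy by blast
  moreover have "ap (x + sm \<i> y) (x + sm \<i> y) = ap x x + (- \<i>) * ap x y + \<i> * ap y x + ap y y"
  proof -
    have "ap (sm \<i> y) (sm \<i> y) = ap y y" using ap_sm[OF y] ap2_sm[OF y] by simp
    then show ?thesis using expand[OF x iy] ap_sm[OF y] ap2_sm[OF x] by simp
  qed
  ultimately have "- Re (ap x y) + Re (ap y x) = 0" using Im_diag[OF x] Im_diag[OF y] by simp
  with i1 show ?thesis by (simp add: complex_eq_iff)
qed

lemma nT_nonneg: assumes "x \<in> DT" shows "nT x \<ge> 0" using Re_diag[OF assms] by (simp add: nT_def)
lemma nT_sq: assumes "x \<in> DT" shows "(nT x)^2 = Re (ap x x)" using Re_diag[OF assms] by (simp add: nT_def)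

lemma expand_re:
  assumes "x \<in> DT" "y \<in> DT"
  shows "Re (ap (x + y) (x + y)) = Re (ap x x) + Re (ap y y) + 2 * Re (ap x y)"
    and "Re (ap (x - y) (x - y)) = Re (ap x x) + Re (ap y y) - 2 * Re (ap x y)"
proof -
  have h: "Re (ap y x) = Re (ap x y)" using herm[OF assms] by simp
  show "Re (ap (x + y) (x + y)) = Re (ap x x) + Re (ap y y) + 2 * Re (ap x y)"
    using expand[OF assms] h by simp
  have "ap (x - y) (x - y) = ap x x - ap x y - ap y x + ap y y"
    using assms by (simp add: ap_diff ap2_diff dom_diff)
  then show "Re (ap (x - y) (x - y)) = Re (ap x x) + Re (ap y y) - 2 * Re (ap x y)"
    using h by simp
qed

lemma expand_sm:
  assumes "x \<in> DT" "y \<in> DT"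
  shows "Re (ap (x + sm t y) (x + sm t y)) = Re (ap x x) + 2 * Re (cnj t * ap x y) + (cmod t)^2 * Re (ap y y)"
proof -
  have ty: "sm t y \<in> DT" using dom_sm assms by blast
  have "ap (sm t y) (sm t y) = t * cnj t * ap y y" using ap_sm ap2_sm assms by simp
  also have "t * cnj t = complex_of_real ((cmod t)^2)" by (rule complex_norm_square[symmetric])
  finally have a: "Re (ap (sm t y) (sm t y)) = (cmod t)^2 * Re (ap y y)" by simp
  have "Re (ap x (sm t y)) = Re (cnj t * ap x y)" using ap2_sm assms by simp
  then show ?thesis using expand_re(1)[OF assms(1) ty] a by simp
qed

lemma cauchy_schwarz:
  assumes x: "x \<in> DT" and y: "y \<in> DT"
  shows "cmod (ap x y) \<le> nT x * nT y"
proof -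
  define b where "b = ap x y"
  have "(cmod b)^2 \<le> Re (ap x x) * Re (ap y y)"
  proof -
    have "(cmod b)^2 \<le> Re (ap x x) * Re (ap y y)"
    proof (rule quad_disc)
      fix t :: real
      have "0 \<le> Re (ap (x + sm (- (complex_of_real t * b)) y) (x + sm (- (complex_of_real t * b)) y))"
        using Re_diag dom_add dom_sm x y by blast
      also have "\<dots> = Re (ap x x) + 2 * Re (cnj (- (complex_of_real t * b)) * b) + (cmod (complex_of_real t * b))^2 * Re (ap y y)"
        using expand_sm[OF x y] b_def by simp
      also have "Re (cnj (- (complex_of_real t * b)) * b) = - t * (cmod b)^2"
      proof -
        have "cnj (- (complex_of_real t * b)) * b = - complex_of_real t * (b * cnj b)" by simp
        also have "b * cnj b = complex_of_real ((cmod b)^2)" by (rule complex_norm_square[symmetric])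
        finally have e: "cnj (- (complex_of_real t * b)) * b = - complex_of_real t * complex_of_real ((cmod b)^2)" .
        show ?thesis unfolding e of_real_minus[symmetric] of_real_mult[symmetric] Re_complex_of_real by (rule refl)
      qed
      also have "(cmod (complex_of_real t * b))^2 = t * t * (cmod b)^2" by (simp add: norm_mult power2_eq_square)
      finally show "0 \<le> Re (ap x x) - 2 * t * (cmod b)\<^sup>2 + t * t * (cmod b)\<^sup>2 * Re (ap y y)"
        by (simp add: algebra_simps)
    qed (use Re_diag x y in auto)
    then show ?thesis .
  qed
  then have "cmod b \<le> sqrt (Re (ap x x) * Re (ap y y))" by (simp add: real_le_rsqrt)
  then show ?thesis by (simp add: nT_def b_def real_sqrt_mult)
qed

lemma nT_triangle:
  assumes x: "x \<in> DT" and y: "y \<in> DT"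
  shows "nT (x + y) \<le> nT x + nT y"
proof -
  have "(nT (x + y))^2 = Re (ap x x) + Re (ap y y) + 2 * Re (ap x y)"
    using nT_sq dom_add expand_re x y by simp
  also have "Re (ap x y) \<le> nT x * nT y" using cauchy_schwarz[OF x y] complex_Re_le_cmod order_trans by blast
  then have "Re (ap x x) + Re (ap y y) + 2 * Re (ap x y) \<le> (nT x + nT y)^2"
    using nT_sq x y by (simp add: power2_eq_square algebra_simps)
  finally have "(nT (x + y))^2 \<le> (nT x + nT y)^2" .
  then show ?thesis by (rule power2_le_imp_le) (simp add: nT_nonneg add_nonneg_nonneg x y)
qed

lemma nT_sm: "x \<in> DT \<Longrightarrow> nT (sm c x) = cmod c * nT x"
proof -
  assume x: "x \<in> DT"
  have "ap (sm c x) (sm c x) = c * cnj c * ap x x" using ap_sm ap2_sm x by simp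
  also have "c * cnj c = complex_of_real ((cmod c)^2)" by (rule complex_norm_square[symmetric])
  finally have "Re (ap (sm c x) (sm c x)) = (cmod c)^2 * Re (ap x x)" by simp
  then show ?thesis by (simp add: nT_def real_sqrt_mult)
qed

lemma nT_scaleR: "x \<in> DT \<Longrightarrow> nT (r *\<^sub>R x) = \<bar>r\<bar> * nT x"
  using nT_sm[of x "complex_of_real r"] sm_real by simp

lemma nT_neg: "x \<in> DT \<Longrightarrow> nT (- x) = nT x" using nT_scaleR[of x "-1"] by simp
lemma nT_commute: "x \<in> DT \<Longrightarrow> y \<in> DT \<Longrightarrow> nT (x - y) = nT (y - x)"
  using nT_neg[of "y - x"] dom_diff by simp
lemma nT_0[simp]: "nT 0 = 0" by (simp add: nT_def ap_0)

lemma nT_diff_triangle: "x \<in> DT \<Longrightarrow> y \<in> DT \<Longrightarrow> z \<in> DT \<Longrightarrow> nT (x - z) \<le> nT (x - y) + nT (y - z)"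
  using nT_triangle[of "x - y" "y - z"] dom_diff by simp

lemma nT_rev_triangle: "x \<in> DT \<Longrightarrow> y \<in> DT \<Longrightarrow> \<bar>nT x - nT y\<bar> \<le> nT (x - y)"
proof -
  assume x: "x \<in> DT" and y: "y \<in> DT"
  have "nT x \<le> nT (x - y) + nT y" using nT_triangle[of "x - y" y] dom_diff x y by simp
  moreover have "nT y \<le> nT (y - x) + nT x" using nT_triangle[of "y - x" x] dom_diff x y by simp
  ultimately show ?thesis using nT_commute[OF x y] by linarith
qed

end


locale fr = posop sm a for sm :: "complex \<Rightarrow> 'a::banach \<Rightarrow> 'a" and a :: "'a op" +
  fixes \<gamma> :: real
  assumes gpos: "\<gamma> > 0" and coer: "\<forall>x\<in>odom a. Re (oapp a x x) \<ge> \<gamma> * (norm x)\<^sup>2"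
    and dense: "closure (odom a) = UNIV"
begin

definition acauchy :: "(nat \<Rightarrow> 'a) \<Rightarrow> bool" where
  "acauchy s \<longleftrightarrow> (\<forall>n. s n \<in> DT) \<and> (\<forall>e>0. \<exists>N. \<forall>m\<ge>N. \<forall>n\<ge>N. nT (s m - s n) < e)"

lemma fr_approx_iff: "fr_approx a x s \<longleftrightarrow> acauchy s \<and> s \<longlonglongrightarrow> x"
  by (simp add: fr_approx_def acauchy_def nT_def)

lemma acauchyD: "acauchy s \<Longrightarrow> s n \<in> DT"
  "acauchy s \<Longrightarrow> e > 0 \<Longrightarrow> \<exists>N. \<forall>m\<ge>N. \<forall>n\<ge>N. nT (s m - s n) < e"
  by (auto simp: acauchy_def)

lemma norm_le_nT: assumes "x \<in> DT" shows "sqrt \<gamma> * norm x \<le> nT x"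
proof -
  have "(sqrt \<gamma> * norm x)^2 \<le> (nT x)^2"
    using coer assms gpos nT_sq[OF assms] by (simp add: power_mult_distrib)
  then show ?thesis using nT_nonneg[OF assms] by (rule power2_le_imp_le)
qed

lemma norm_le_nT': assumes "x \<in> DT" shows "norm x \<le> nT x / sqrt \<gamma>"
  using norm_le_nT[OF assms] gpos by (simp add: field_simps)

lemma acauchy_conv: assumes "acauchy s" shows "\<exists>x. s \<longlonglongrightarrow> x"
proof -
  have "Cauchy s"
    unfolding Cauchy_def
  proof (intro allI impI)
    fix e :: real assume e: "e > 0"
    obtain N where N: "\<And>m n. m \<ge> N \<Longrightarrow> n \<ge> N \<Longrightarrow> nT (s m - s n) < e * sqrt \<gamma>"
      using acauchyD(2)[OF assms, of "e * sqrt \<gamma>"] e gpos by auto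
    show "\<exists>M. \<forall>m\<ge>M. \<forall>n\<ge>M. dist (s m) (s n) < e"
    proof (intro exI allI impI)
      fix m n assume "m \<ge> N" "n \<ge> N"
      have "sqrt \<gamma> * norm (s m - s n) \<le> nT (s m - s n)"
        using norm_le_nT dom_diff acauchyD(1)[OF assms] by blast
      also have "\<dots> < e * sqrt \<gamma>" using N \<open>m \<ge> N\<close> \<open>n \<ge> N\<close> by blast
      finally show "dist (s m) (s n) < e" using gpos by (simp add: dist_norm mult.commute)
    qed
  qed
  then show ?thesis using Cauchy_convergent_iff convergent_def by blast
qed

lemma acauchy_bounded: assumes "acauchy s" shows "\<exists>M>0. \<forall>n. nT (s n) \<le> M"
proof -
  obtain N where N: "\<And>m n. m \<ge> N \<Longrightarrow> n \<ge> N \<Longrightarrow> nT (s m - s n) < 1"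
    using acauchyD(2)[OF assms, of 1] by auto
  define M where "M = (\<Sum>i\<le>N. nT (s i)) + 1"
  have nn: "\<And>i. nT (s i) \<ge> 0" using nT_nonneg acauchyD(1)[OF assms] by blast
  have le: "nT (s i) \<le> (\<Sum>i\<le>N. nT (s i))" if "i \<le> N" for i
    using that nn by (intro member_le_sum) auto
  have "nT (s n) \<le> M" for n
  proof (cases "n \<le> N")
    case True then show ?thesis using le[OF True] by (simp add: M_def)
  next
    case False
    have "nT (s n) \<le> nT (s n - s N) + nT (s N)"
      using nT_triangle[of "s n - s N" "s N"] dom_diff acauchyD(1)[OF assms] by simp
    also have "\<dots> \<le> 1 + nT (s N)" using N[of n N] False by simp
    finally show ?thesis using le[of N] by (simp add: M_def)
  qed
  moreover have "M > 0" unfolding M_def using nn by (simp add: add_nonneg_pos sum_nonneg)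
  ultimately show ?thesis by blast
qed

lemma acauchy_add: assumes s: "acauchy s" and t: "acauchy t" shows "acauchy (\<lambda>n. s n + t n)"
  unfolding acauchy_def
proof (intro conjI allI impI)
  fix n show "s n + t n \<in> DT" using dom_add acauchyD(1) s t by blast
next
  fix e :: real assume e: "e > 0"
  obtain N1 where N1: "\<And>m n. m \<ge> N1 \<Longrightarrow> n \<ge> N1 \<Longrightarrow> nT (s m - s n) < e/2"
    using acauchyD(2)[OF s, of "e/2"] e by auto
  obtain N2 where N2: "\<And>m n. m \<ge> N2 \<Longrightarrow> n \<ge> N2 \<Longrightarrow> nT (t m - t n) < e/2"
    using acauchyD(2)[OF t, of "e/2"] e by auto
  show "\<exists>N. \<forall>m\<ge>N. \<forall>n\<ge>N. nT (s m + t m - (s n + t n)) < e"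
  proof (intro exI[of _ "max N1 N2"] allI impI)
    fix m n assume mn: "m \<ge> max N1 N2" "n \<ge> max N1 N2"
    have eq: "s m + t m - (s n + t n) = (s m - s n) + (t m - t n)" by simp
    have "nT ((s m - s n) + (t m - t n)) \<le> nT (s m - s n) + nT (t m - t n)"
      by (rule nT_triangle) (use dom_diff acauchyD(1) s t in blast)+
    also have "nT (s m - s n) < e/2" using N1 mn by simp
    also have "nT (t m - t n) < e/2" using N2 mn by simp
    finally show "nT (s m + t m - (s n + t n)) < e" unfolding eq by simp
  qed
qed

lemma acauchy_sm: assumes "acauchy s" shows "acauchy (\<lambda>n. sm c (s n))"
  unfolding acauchy_def
proof (intro conjI allI impI)
  fix n show "sm c (s n) \<in> DT" using dom_sm acauchyD(1)[OF assms] by blast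
next
  fix e :: real assume e: "e > 0"
  have cp: "cmod c + 1 > 0" by (simp add: add_nonneg_pos)
  have ep: "e / (cmod c + 1) > 0" using e cp by simp
  obtain N where N: "\<And>m n. m \<ge> N \<Longrightarrow> n \<ge> N \<Longrightarrow> nT (s m - s n) < e / (cmod c + 1)"
    using acauchyD(2)[OF assms ep] by auto
  show "\<exists>N. \<forall>m\<ge>N. \<forall>n\<ge>N. nT (sm c (s m) - sm c (s n)) < e"
  proof (intro exI allI impI)
    fix m n assume "m \<ge> N" "n \<ge> N"
    have "nT (sm c (s m) - sm c (s n)) = cmod c * nT (s m - s n)"
      using nT_sm dom_diff acauchyD(1)[OF assms] sm_diff[symmetric] by metis
    also have "\<dots> \<le> (cmod c + 1) * nT (s m - s n)"
      using nT_nonneg dom_diff acauchyD(1)[OF assms] by (simp add: mult_right_mono)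
    also have "\<dots> < (cmod c + 1) * (e / (cmod c + 1))"
      using N[OF \<open>m \<ge> N\<close> \<open>n \<ge> N\<close>] by (intro mult_strict_left_mono) (auto simp: add_nonneg_pos)
    also have "\<dots> = e" using cp by simp
    finally show "nT (sm c (s m) - sm c (s n)) < e" .
  qed
qed

lemma acauchy_neg: "acauchy s \<Longrightarrow> acauchy (\<lambda>n. - s n)"
  using acauchy_sm[of s "-1"] sm_m1 by simp

lemma acauchy_diff: "acauchy s \<Longrightarrow> acauchy t \<Longrightarrow> acauchy (\<lambda>n. s n - t n)"
  using acauchy_add[of s "\<lambda>n. - t n"] acauchy_neg by simp

lemma acauchy_const: "x \<in> DT \<Longrightarrow> acauchy (\<lambda>n. x)"
  by (simp add: acauchy_def dom_diff)

lemma acauchy_tendsto_0: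
  assumes s: "acauchy s" and lim: "s \<longlonglongrightarrow> 0"
  shows "(\<lambda>n. nT (s n)) \<longlonglongrightarrow> 0"
proof (rule LIMSEQ_I)
  fix e :: real assume e: "e > 0"
  obtain M where M: "M > 0" "\<And>n. nT (s n) \<le> M" using acauchy_bounded[OF s] by blast
  define e' where "e' = e^2 / (2 * M)"
  have e': "e' > 0" using e M by (simp add: e'_def)
  obtain N where N: "\<And>m n. m \<ge> N \<Longrightarrow> n \<ge> N \<Longrightarrow> nT (s m - s n) < e'"
    using acauchyD(2)[OF s e'] by auto
  have sd: "\<And>n. s n \<in> DT" using acauchyD(1)[OF s] .
  show "\<exists>no. \<forall>n\<ge>no. norm (nT (s n) - 0) < e"
  proof (intro exI allI impI)
    fix n assume n: "n \<ge> N"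
    have lim2: "(\<lambda>m. M * e' + Re (ap (s n) (s m))) \<longlonglongrightarrow> M * e' + Re (ap (s n) 0)"
      by (intro tendsto_intros ap2_tendsto sd lim)
    have ev: "\<forall>\<^sub>F m in sequentially. Re (ap (s n) (s n)) \<le> M * e' + Re (ap (s n) (s m))"
      unfolding eventually_sequentially
    proof (intro exI allI impI)
      fix m assume m: "m \<ge> N"
      have "ap (s n) (s n) = ap (s n) (s n - s m) + ap (s n) (s m)"
        using ap2_diff[OF sd] by simp
      then have "Re (ap (s n) (s n)) \<le> cmod (ap (s n) (s n - s m)) + Re (ap (s n) (s m))"
        using complex_Re_le_cmod by simp
      also have "cmod (ap (s n) (s n - s m)) \<le> nT (s n) * nT (s n - s m)"
        using cauchy_schwarz sd dom_diff by blast
      also have "\<dots> \<le> M * e'"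
        using N[OF n m] M(2)[of n] nT_nonneg sd dom_diff
        by (intro mult_mono) (auto simp: less_imp_le M(1) less_imp_le[OF M(1)])
      finally show "Re (ap (s n) (s n)) \<le> M * e' + Re (ap (s n) (s m))" by simp
    qed
    have "Re (ap (s n) (s n)) \<le> M * e' + Re (ap (s n) 0)"
      using tendsto_lowerbound[OF lim2 ev] by simp
    then have "(nT (s n))^2 \<le> M * e'" using nT_sq[OF sd] ap2_0[OF sd] by simp
    also have "M * e' < e^2" using M e by (simp add: e'_def)
    finally have "(nT (s n))^2 < e^2" .
    then have "nT (s n) < e" using e by (simp add: power_less_imp_less_base less_imp_le)
    then show "norm (nT (s n) - 0) < e" using nT_nonneg[OF sd] by simp
  qed
qed

lemma bil_diff_0:
  assumes s: "acauchy s" and s': "acauchy s'" and t: "acauchy t" and t': "acauchy t'"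
    and ss: "(\<lambda>n. nT (s n - s' n)) \<longlonglongrightarrow> 0" and tt: "(\<lambda>n. nT (t n - t' n)) \<longlonglongrightarrow> 0"
  shows "(\<lambda>n. ap (s n) (t n) - ap (s' n) (t' n)) \<longlonglongrightarrow> 0"
proof -
  obtain Mt where Mt: "\<And>n. nT (t n) \<le> Mt" using acauchy_bounded[OF t] by blast
  obtain Ms where Ms: "\<And>n. nT (s' n) \<le> Ms" using acauchy_bounded[OF s'] by blast
  have d: "\<And>n. s n \<in> DT" "\<And>n. s' n \<in> DT" "\<And>n. t n \<in> DT" "\<And>n. t' n \<in> DT"
    using acauchyD(1) s s' t t' by blast+
  have b: "norm (ap (s n) (t n) - ap (s' n) (t' n)) \<le> nT (s n - s' n) * Mt + Ms * nT (t n - t' n)" for n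
  proof -
    have "ap (s n) (t n) - ap (s' n) (t' n) = ap (s n - s' n) (t n) + ap (s' n) (t n - t' n)"
      using ap_diff ap2_diff d by simp
    then have 1: "norm (ap (s n) (t n) - ap (s' n) (t' n)) \<le> cmod (ap (s n - s' n) (t n)) + cmod (ap (s' n) (t n - t' n))"
      by (simp add: norm_triangle_ineq)
    have 2: "cmod (ap (s n - s' n) (t n)) \<le> nT (s n - s' n) * nT (t n)"
      using cauchy_schwarz dom_diff d by blast
    have 3: "nT (s n - s' n) * nT (t n) \<le> nT (s n - s' n) * Mt"
      using Mt[of n] nT_nonneg dom_diff d by (simp add: mult_left_mono)
    have 4: "cmod (ap (s' n) (t n - t' n)) \<le> nT (s' n) * nT (t n - t' n)"
      using cauchy_schwarz dom_diff d by blast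
    have 5: "nT (s' n) * nT (t n - t' n) \<le> Ms * nT (t n - t' n)"
      using Ms[of n] nT_nonneg dom_diff d by (simp add: mult_right_mono)
    show ?thesis using 1 2 3 4 5 by linarith
  qed
  have g: "(\<lambda>n. nT (s n - s' n) * Mt + Ms * nT (t n - t' n)) \<longlonglongrightarrow> 0"
    using tendsto_add[OF tendsto_mult_left_zero[OF ss] tendsto_mult_right_zero[OF tt]] by simp
  show ?thesis
    by (rule Lim_null_comparison[OF _ g]) (use b in simp)
qed

lemma bil_convergent:
  assumes s: "acauchy s" and t: "acauchy t"
  shows "convergent (\<lambda>n. ap (s n) (t n))"
proof -
  obtain Mt where Mt: "\<And>n. nT (t n) \<le> Mt" "Mt > 0" using acauchy_bounded[OF t] by blast
  obtain Ms where Ms: "\<And>n. nT (s n) \<le> Ms" "Ms > 0" using acauchy_bounded[OF s] by blast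
  have d: "\<And>n. s n \<in> DT" "\<And>n. t n \<in> DT" using acauchyD(1) s t by blast+
  have "Cauchy (\<lambda>n. ap (s n) (t n))"
    unfolding Cauchy_def
  proof (intro allI impI)
    fix e :: real assume e: "e > 0"
    have e1: "e / (2 * Mt) > 0" and e2: "e / (2 * Ms) > 0" using e Mt Ms by auto
    obtain N1 where N1: "\<And>m n. m \<ge> N1 \<Longrightarrow> n \<ge> N1 \<Longrightarrow> nT (s m - s n) < e / (2 * Mt)"
      using acauchyD(2)[OF s e1] by auto
    obtain N2 where N2: "\<And>m n. m \<ge> N2 \<Longrightarrow> n \<ge> N2 \<Longrightarrow> nT (t m - t n) < e / (2 * Ms)"
      using acauchyD(2)[OF t e2] by auto
    show "\<exists>M. \<forall>m\<ge>M. \<forall>n\<ge>M. dist (ap (s m) (t m)) (ap (s n) (t n)) < e"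
    proof (intro exI[of _ "max N1 N2"] allI impI)
      fix m n assume mn: "m \<ge> max N1 N2" "n \<ge> max N1 N2"
      have "ap (s m) (t m) - ap (s n) (t n) = ap (s m - s n) (t m) + ap (s n) (t m - t n)"
        using ap_diff ap2_diff d by simp
      then have 1: "dist (ap (s m) (t m)) (ap (s n) (t n)) \<le> cmod (ap (s m - s n) (t m)) + cmod (ap (s n) (t m - t n))"
        by (simp add: dist_norm norm_triangle_ineq)
      have 2: "cmod (ap (s m - s n) (t m)) \<le> nT (s m - s n) * nT (t m)"
        using cauchy_schwarz dom_diff d by blast
      have 3: "nT (s m - s n) * nT (t m) \<le> nT (s m - s n) * Mt"
        using Mt(1)[of m] nT_nonneg dom_diff d by (simp add: mult_left_mono)
      have 4: "nT (s m - s n) * Mt < e / (2 * Mt) * Mt"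
        using N1 mn Mt(2) by (intro mult_strict_right_mono) auto
      have 5: "cmod (ap (s n) (t m - t n)) \<le> nT (s n) * nT (t m - t n)"
        using cauchy_schwarz dom_diff d by blast
      have 6: "nT (s n) * nT (t m - t n) \<le> Ms * nT (t m - t n)"
        using Ms(1)[of n] nT_nonneg dom_diff d by (simp add: mult_right_mono)
      have 7: "Ms * nT (t m - t n) < Ms * (e / (2 * Ms))"
        using N2 mn Ms(2) by (intro mult_strict_left_mono) auto
      have 8: "e / (2 * Mt) * Mt + Ms * (e / (2 * Ms)) = e" using Mt(2) Ms(2) by simp
      show "dist (ap (s m) (t m)) (ap (s n) (t n)) < e" using 1 2 3 4 5 6 7 8 by linarith
    qed
  qed
  then show ?thesis using Cauchy_convergent_iff by blast
qed

end


context cplx begin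
lemma sm_tendsto: "s \<longlonglongrightarrow> x \<Longrightarrow> (\<lambda>n. sm c (s n)) \<longlonglongrightarrow> sm c x"
proof -
  assume s: "s \<longlonglongrightarrow> x"
  have "(\<lambda>n. norm (s n - x)) \<longlonglongrightarrow> 0" using s by (simp add: LIM_zero_iff tendsto_norm_zero_iff)
  then have "(\<lambda>n. cmod c * norm (s n - x)) \<longlonglongrightarrow> 0" by (rule tendsto_mult_right_zero)
  then have "(\<lambda>n. norm (sm c (s n) - sm c x)) \<longlonglongrightarrow> 0" by (simp add: sm_diff[symmetric] sm_norm)
  then show ?thesis by (simp add: LIM_zero_iff tendsto_norm_zero_iff)
qed
end

context fr begin

abbreviation "H \<equiv> fr_H a"
abbreviation "ff \<equiv> fr_form a"
definition "fN x = sqrt (Re (ff x x))"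

lemma H_iff: "x \<in> H \<longleftrightarrow> (\<exists>s. fr_approx a x s)" by (simp add: fr_H_def)

lemma appr: "x \<in> H \<Longrightarrow> fr_approx a x (SOME s. fr_approx a x s)"
  by (metis H_iff someI_ex)

lemma K:
  assumes sx: "fr_approx a x s" and ty: "fr_approx a y t"
  shows "(\<lambda>n. ap (s n) (t n)) \<longlonglongrightarrow> ff x y"
proof -
  define s' where "s' = (SOME s. fr_approx a x s)"
  define t' where "t' = (SOME t. fr_approx a y t)"
  have s': "fr_approx a x s'" unfolding s'_def using sx by (metis someI_ex)
  have t': "fr_approx a y t'" unfolding t'_def using ty by (metis someI_ex)
  have ac: "acauchy s" "acauchy s'" "acauchy t" "acauchy t'" "s \<longlonglongrightarrow> x" "s' \<longlonglongrightarrow> x" "t \<longlonglongrightarrow> y" "t' \<longlonglongrightarrow> y"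
    using sx ty s' t' by (auto simp: fr_approx_iff)
  have "convergent (\<lambda>n. ap (s' n) (t' n))" by (rule bil_convergent) (use ac in auto)
  then have l: "(\<lambda>n. ap (s' n) (t' n)) \<longlonglongrightarrow> ff x y"
    unfolding fr_form_def s'_def t'_def by (simp add: convergent_LIMSEQ_iff)
  have d1: "(\<lambda>n. nT (s n - s' n)) \<longlonglongrightarrow> 0"
    by (rule acauchy_tendsto_0) (use ac acauchy_diff tendsto_diff[OF ac(5) ac(6)] in auto)
  have d2: "(\<lambda>n. nT (t n - t' n)) \<longlonglongrightarrow> 0"
    by (rule acauchy_tendsto_0) (use ac acauchy_diff tendsto_diff[OF ac(7) ac(8)] in auto)
  have "(\<lambda>n. (ap (s n) (t n) - ap (s' n) (t' n)) + ap (s' n) (t' n)) \<longlonglongrightarrow> 0 + ff x y"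
    by (rule tendsto_add[OF bil_diff_0 l]) (use ac d1 d2 in auto)
  then show ?thesis by simp
qed

lemma approx_add: "fr_approx a x s \<Longrightarrow> fr_approx a y t \<Longrightarrow> fr_approx a (x + y) (\<lambda>n. s n + t n)"
  by (simp add: fr_approx_iff acauchy_add tendsto_add)
lemma approx_sm: "fr_approx a x s \<Longrightarrow> fr_approx a (sm c x) (\<lambda>n. sm c (s n))"
  by (simp add: fr_approx_iff acauchy_sm sm_tendsto)
lemma approx_diff: "fr_approx a x s \<Longrightarrow> fr_approx a y t \<Longrightarrow> fr_approx a (x - y) (\<lambda>n. s n - t n)"
  by (simp add: fr_approx_iff acauchy_diff tendsto_diff)
lemma approx_const: "x \<in> DT \<Longrightarrow> fr_approx a x (\<lambda>n. x)"
  by (simp add: fr_approx_iff acauchy_const)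

lemma H_add: "x \<in> H \<Longrightarrow> y \<in> H \<Longrightarrow> x + y \<in> H" using approx_add H_iff by blast
lemma H_sm: "x \<in> H \<Longrightarrow> sm c x \<in> H" using approx_sm H_iff by blast
lemma H_diff: "x \<in> H \<Longrightarrow> y \<in> H \<Longrightarrow> x - y \<in> H" using approx_diff H_iff by blast
lemma D_H: "x \<in> DT \<Longrightarrow> x \<in> H" using approx_const H_iff by blast
lemma H_0: "0 \<in> H" using D_H dom0 by blast
lemma H_dense: "closure H = UNIV"
  using dense closure_mono[of DT H] D_H by blast

lemma ff_add1: assumes "x \<in> H" "y \<in> H" "z \<in> H" shows "ff (x + y) z = ff x z + ff y z"
proof -
  obtain s t u where s: "fr_approx a x s" and t: "fr_approx a y t" and u: "fr_approx a z u"
    using assms H_iff by blast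
  have d: "\<And>n. s n \<in> DT" "\<And>n. t n \<in> DT" using s t by (auto simp: fr_approx_iff acauchy_def)
  have "(\<lambda>n. ap (s n + t n) (u n)) \<longlonglongrightarrow> ff (x + y) z" by (rule K[OF approx_add[OF s t] u])
  moreover have "(\<lambda>n. ap (s n + t n) (u n)) \<longlonglongrightarrow> ff x z + ff y z"
    using tendsto_add[OF K[OF s u] K[OF t u]] ap_add d by simp
  ultimately show ?thesis using LIMSEQ_unique by blast
qed

lemma ff_sm1: assumes "x \<in> H" "z \<in> H" shows "ff (sm c x) z = c * ff x z"
proof -
  obtain s u where s: "fr_approx a x s" and u: "fr_approx a z u" using assms H_iff by blast
  have d: "\<And>n. s n \<in> DT" using s by (auto simp: fr_approx_iff acauchy_def)
  have "(\<lambda>n. ap (sm c (s n)) (u n)) \<longlonglongrightarrow> ff (sm c x) z" by (rule K[OF approx_sm[OF s] u])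
  moreover have "(\<lambda>n. ap (sm c (s n)) (u n)) \<longlonglongrightarrow> c * ff x z"
    using tendsto_mult[OF tendsto_const K[OF s u]] ap_sm d by simp
  ultimately show ?thesis using LIMSEQ_unique by blast
qed

lemma ff_herm: assumes "x \<in> H" "y \<in> H" shows "ff y x = cnj (ff x y)"
proof -
  obtain s t where s: "fr_approx a x s" and t: "fr_approx a y t" using assms H_iff by blast
  have d: "\<And>n. s n \<in> DT" "\<And>n. t n \<in> DT" using s t by (auto simp: fr_approx_iff acauchy_def)
  have "(\<lambda>n. ap (t n) (s n)) \<longlonglongrightarrow> ff y x" by (rule K[OF t s])
  moreover have "(\<lambda>n. ap (t n) (s n)) = (\<lambda>n. cnj (ap (s n) (t n)))"
    by (rule ext) (rule herm[OF d(1) d(2)])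
  then have "(\<lambda>n. ap (t n) (s n)) \<longlonglongrightarrow> cnj (ff x y)"
    using tendsto_cnj[OF K[OF s t]] by simp
  ultimately show ?thesis using LIMSEQ_unique by blast
qed

lemma ff_add2: assumes "x \<in> H" "y \<in> H" "z \<in> H" shows "ff z (x + y) = ff z x + ff z y"
proof -
  have "ff z (x + y) = cnj (ff (x + y) z)" using ff_herm[of "x + y" z] H_add assms by simp
  also have "\<dots> = cnj (ff x z) + cnj (ff y z)" using ff_add1 assms by simp
  also have "cnj (ff x z) = ff z x" using ff_herm[of x z] assms by simp
  also have "cnj (ff y z) = ff z y" using ff_herm[of y z] assms by simp
  finally show ?thesis .
qed

lemma ff_sm2: assumes "x \<in> H" "z \<in> H" shows "ff z (sm c x) = cnj c * ff z x"
proof -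
  have "ff z (sm c x) = cnj (ff (sm c x) z)" using ff_herm[of "sm c x" z] H_sm assms by simp
  also have "\<dots> = cnj c * cnj (ff x z)" using ff_sm1 assms by simp
  also have "cnj (ff x z) = ff z x" using ff_herm[of x z] assms by simp
  finally show ?thesis .
qed

lemma ff_diff1: assumes "x \<in> H" "y \<in> H" "z \<in> H" shows "ff (x - y) z = ff x z - ff y z"
proof -
  have "ff (x - y) z + ff y z = ff x z" using ff_add1[of "x - y" y z] assms H_diff by simp
  then show ?thesis by (simp add: eq_diff_eq)
qed

lemma ff_diff2: assumes "x \<in> H" "y \<in> H" "z \<in> H" shows "ff z (x - y) = ff z x - ff z y"
proof -
  have "ff z (x - y) = cnj (ff (x - y) z)" using ff_herm[of "x - y" z] H_diff assms by simp
  also have "\<dots> = cnj (ff x z) - cnj (ff y z)" using ff_diff1 assms by simp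
  also have "cnj (ff x z) = ff z x" using ff_herm[of x z] assms by simp
  also have "cnj (ff y z) = ff z y" using ff_herm[of y z] assms by simp
  finally show ?thesis .
qed

lemma ff_D: assumes x: "x \<in> DT" and y: "y \<in> H" shows "ff x y = ap x y"
proof -
  obtain t where t: "fr_approx a y t" using y H_iff by blast
  have "(\<lambda>n. ap x (t n)) \<longlonglongrightarrow> ff x y" using K[OF approx_const[OF x] t] by simp
  moreover have "(\<lambda>n. ap x (t n)) \<longlonglongrightarrow> ap x y" using ap2_tendsto x t by (simp add: fr_approx_iff)
  ultimately show ?thesis using LIMSEQ_unique by blast
qed

lemma ff_diag: assumes "x \<in> H" shows "Im (ff x x) = 0" "Re (ff x x) \<ge> \<gamma> * (norm x)^2"
proof -
  obtain s where s: "fr_approx a x s" using assms H_iff by blast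
  have d: "\<And>n. s n \<in> DT" and sx: "s \<longlonglongrightarrow> x" using s by (auto simp: fr_approx_iff acauchy_def)
  have l: "(\<lambda>n. ap (s n) (s n)) \<longlonglongrightarrow> ff x x" by (rule K[OF s s])
  have "(\<lambda>n. Im (ap (s n) (s n))) \<longlonglongrightarrow> Im (ff x x)" by (rule tendsto_Im[OF l])
  moreover have "(\<lambda>n. Im (ap (s n) (s n))) = (\<lambda>n. 0)" using Im_diag d by auto
  ultimately show "Im (ff x x) = 0" by (metis LIMSEQ_const_iff)
  have l1: "(\<lambda>n. Re (ap (s n) (s n))) \<longlonglongrightarrow> Re (ff x x)" by (rule tendsto_Re[OF l])
  have l2: "(\<lambda>n. \<gamma> * (norm (s n))^2) \<longlonglongrightarrow> \<gamma> * (norm x)^2" by (intro tendsto_intros sx)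
  show "Re (ff x x) \<ge> \<gamma> * (norm x)^2"
    by (rule LIMSEQ_le[OF l2 l1]) (use coer d in auto)
qed

lemma fN_nonneg: "x \<in> H \<Longrightarrow> fN x \<ge> 0"
  using ff_diag(2)[of x] gpos by (simp add: fN_def) (meson order_trans zero_le_power2 mult_nonneg_nonneg less_imp_le)

lemma fN_sq: "x \<in> H \<Longrightarrow> (fN x)^2 = Re (ff x x)"
  using ff_diag(2)[of x] gpos unfolding fN_def
  by (subst real_sqrt_pow2) (auto intro: order_trans[rotated] mult_nonneg_nonneg less_imp_le)

lemma ff_real: "x \<in> H \<Longrightarrow> ff x x = complex_of_real ((fN x)^2)"
  using ff_diag(1) fN_sq by (simp add: complex_eq_iff)

lemma norm_le_fN: assumes "x \<in> H" shows "sqrt \<gamma> * norm x \<le> fN x"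
proof -
  have "(sqrt \<gamma> * norm x)^2 \<le> (fN x)^2"
    using ff_diag(2)[OF assms] gpos fN_sq[OF assms] by (simp add: power_mult_distrib)
  then show ?thesis using fN_nonneg[OF assms] by (rule power2_le_imp_le)
qed

lemma approx_nT: assumes s: "fr_approx a x s" shows "(\<lambda>n. nT (s n)) \<longlonglongrightarrow> fN x"
proof -
  have d: "\<And>n. s n \<in> DT" using s by (auto simp: fr_approx_iff acauchy_def)
  have "(\<lambda>n. sqrt (Re (ap (s n) (s n)))) \<longlonglongrightarrow> sqrt (Re (ff x x))"
    by (intro tendsto_intros K[OF s s])
  then show ?thesis by (simp add: nT_def fN_def)
qed

lemma ff_cs: assumes x: "x \<in> H" and y: "y \<in> H" shows "cmod (ff x y) \<le> fN x * fN y"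
proof -
  obtain s t where s: "fr_approx a x s" and t: "fr_approx a y t" using assms H_iff by blast
  have d: "\<And>n. s n \<in> DT" "\<And>n. t n \<in> DT" using s t by (auto simp: fr_approx_iff acauchy_def)
  have l1: "(\<lambda>n. cmod (ap (s n) (t n))) \<longlonglongrightarrow> cmod (ff x y)" by (intro tendsto_intros K[OF s t])
  have l2: "(\<lambda>n. nT (s n) * nT (t n)) \<longlonglongrightarrow> fN x * fN y"
    by (intro tendsto_intros approx_nT s t)
  show ?thesis by (rule LIMSEQ_le[OF l1 l2]) (use cauchy_schwarz d in auto)
qed

lemma approx_fN: assumes s: "fr_approx a x s" shows "(\<lambda>m. fN (x - s m)) \<longlonglongrightarrow> 0"
proof (rule LIMSEQ_I)
  fix e :: real assume e: "e > 0"
  have ac: "acauchy s" and d: "\<And>n. s n \<in> DT" and sx: "s \<longlonglongrightarrow> x" using s by (auto simp: fr_approx_iff acauchy_def)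
  obtain N where N: "\<And>m n. m \<ge> N \<Longrightarrow> n \<ge> N \<Longrightarrow> nT (s m - s n) < e/2"
    using acauchyD(2)[OF ac, of "e/2"] e by auto
  have xH: "x \<in> H" using s H_iff by blast
  show "\<exists>no. \<forall>m\<ge>no. norm (fN (x - s m) - 0) < e"
  proof (intro exI allI impI)
    fix m assume m: "m \<ge> N"
    have sm: "s m \<in> H" using D_H d by blast
    have ap': "fr_approx a (x - s m) (\<lambda>n. s n - s m)" by (rule approx_diff[OF s approx_const[OF d[of m]]])
    have l: "(\<lambda>n. Re (ap (s n - s m) (s n - s m))) \<longlonglongrightarrow> Re (ff (x - s m) (x - s m))"
      by (intro tendsto_Re K[OF ap' ap'])
    have "Re (ff (x - s m) (x - s m)) \<le> (e/2)^2"
    proof (rule LIMSEQ_le_const2[OF l], intro exI allI impI)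
      fix n assume n: "n \<ge> N"
      have dd: "s n - s m \<in> DT" using dom_diff d by blast
      have "Re (ap (s n - s m) (s n - s m)) = (nT (s n - s m))^2" using nT_sq[OF dd] by simp
      also have "\<dots> \<le> (e/2)^2"
        by (rule power_mono) (use N[OF n m] nT_nonneg[OF dd] in auto)
      finally show "Re (ap (s n - s m) (s n - s m)) \<le> (e/2)^2" .
    qed
    moreover have "(fN (x - s m))^2 = Re (ff (x - s m) (x - s m))" by (rule fN_sq[OF H_diff[OF xH sm]])
    ultimately have "(fN (x - s m))^2 \<le> (e/2)^2" by simp
    then have "fN (x - s m) \<le> e/2" by (rule power2_le_imp_le) (use e in simp)
    then show "norm (fN (x - s m) - 0) < e" using fN_nonneg[OF H_diff[OF xH sm]] e by simp
  qed
qed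

lemma approx_ff1: assumes s: "fr_approx a x s" and y: "y \<in> H" shows "(\<lambda>m. ff (s m) y) \<longlonglongrightarrow> ff x y"
proof -
  have d: "\<And>n. s n \<in> H" using s D_H by (auto simp: fr_approx_iff acauchy_def)
  have xH: "x \<in> H" using s H_iff by blast
  have b: "norm (ff (s m) y - ff x y) \<le> fN (x - s m) * fN y" for m
  proof -
    have "ff (s m) y - ff x y = - ff (x - s m) y" using ff_diff1 d xH y by simp
    then show ?thesis using ff_cs[of "x - s m" y] H_diff d xH y by simp
  qed
  have "(\<lambda>m. fN (x - s m) * fN y) \<longlonglongrightarrow> 0" by (rule tendsto_mult_left_zero[OF approx_fN[OF s]])
  then have "(\<lambda>m. ff (s m) y - ff x y) \<longlonglongrightarrow> 0"
    by (rule Lim_null_comparison[rotated]) (use b in simp)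
  then show ?thesis by (simp add: LIM_zero_iff)
qed

lemma approx_ff2: assumes s: "fr_approx a x s" and y: "y \<in> H" shows "(\<lambda>m. ff y (s m)) \<longlonglongrightarrow> ff y x"
proof -
  have d: "\<And>n. s n \<in> H" using s D_H by (auto simp: fr_approx_iff acauchy_def)
  have xH: "x \<in> H" using s H_iff by blast
  have "(\<lambda>m. cnj (ff (s m) y)) \<longlonglongrightarrow> cnj (ff x y)" by (intro tendsto_cnj approx_ff1 s y)
  moreover have "(\<lambda>m. cnj (ff (s m) y)) = (\<lambda>m. ff y (s m))" by (rule ext) (rule ff_herm[OF d y, symmetric])
  moreover have "cnj (ff x y) = ff y x" by (rule ff_herm[OF xH y, symmetric])
  ultimately show ?thesis by simp
qed

end


context fr begin

abbreviation "FF \<equiv> friedrichs sm a"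

lemma FF_dom: "odom FF = {x \<in> H. continuous_on H (\<lambda>y. ff x y)}"
  by (simp add: friedrichs_def odom_def)
lemma FF_app: "oapp FF x = (THE z. z \<in> cdual sm \<and> (\<forall>y\<in>H. z y = ff x y))"
  by (simp add: friedrichs_def oapp_def)

lemma ff_0_2: "x \<in> H \<Longrightarrow> ff x 0 = 0" using ff_sm2[of 0 x 0] H_0 by simp
lemma ff_0_1: "y \<in> H \<Longrightarrow> ff 0 y = 0" using ff_sm1[of 0 y 0] H_0 by simp
lemma H_scaleR: "y \<in> H \<Longrightarrow> r *\<^sub>R y \<in> H" using H_sm[of y "complex_of_real r"] sm_real by simp
lemma ff_scaleR2: "x \<in> H \<Longrightarrow> y \<in> H \<Longrightarrow> ff x (r *\<^sub>R y) = complex_of_real r * ff x y"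
  using ff_sm2[of y x "complex_of_real r"] sm_real by simp
lemma ff_scaleR1: "x \<in> H \<Longrightarrow> y \<in> H \<Longrightarrow> ff (r *\<^sub>R x) y = complex_of_real r * ff x y"
  using ff_sm1[of x y "complex_of_real r"] sm_real by simp

lemma ext_lemma:
  assumes x: "x \<in> H" and K: "\<And>y. y \<in> H \<Longrightarrow> cmod (ff x y) \<le> K * norm y"
  shows "\<exists>z\<in>cdual sm. \<forall>y\<in>H. z y = ff x y"
proof -
  define K' where "K' = \<bar>K\<bar> + 1"
  have K'p: "K' > 0" by (simp add: K'_def add_nonneg_pos)
  have K': "cmod (ff x y) \<le> K' * norm y" if "y \<in> H" for y
  proof -
    have "K * norm y \<le> K' * norm y" by (intro mult_right_mono) (auto simp: K'_def)
    then show ?thesis using K[OF that] by linarith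
  qed
  have uc: "uniformly_continuous_on H (ff x)"
    unfolding uniformly_continuous_on_def
  proof (intro allI impI)
    fix e :: real assume e: "e > 0"
    show "\<exists>d>0. \<forall>y\<in>H. \<forall>y'\<in>H. dist y' y < d \<longrightarrow> dist (ff x y') (ff x y) < e"
    proof (intro exI[of _ "e / K'"] conjI ballI impI)
      show "e / K' > 0" using e K'p by simp
      fix y y' assume yy: "y \<in> H" "y' \<in> H" "dist y' y < e / K'"
      have "dist (ff x y') (ff x y) = cmod (ff x (y' - y))" using ff_diff2 x yy by (simp add: dist_norm)
      also have "\<dots> \<le> K' * norm (y' - y)" using K' H_diff yy by blast
      also have "\<dots> < K' * (e / K')" using yy(3) K'p by (intro mult_strict_left_mono) (auto simp: dist_norm)
      also have "\<dots> = e" using K'p by simp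
      finally show "dist (ff x y') (ff x y) < e" .
    qed
  qed
  obtain g where gu: "uniformly_continuous_on (closure H) g" and gH: "\<And>y. y \<in> H \<Longrightarrow> ff x y = g y"
    using uniformly_continuous_on_extension_on_closure[OF uc] by metis
  have gc: "continuous_on UNIV g" using gu H_dense uniformly_continuous_imp_continuous by metis
  have gt: "(\<lambda>n. g (s n)) \<longlonglongrightarrow> g u" if "s \<longlonglongrightarrow> u" for s u
    using gc that by (metis continuous_on_tendsto_compose UNIV_I eventually_sequentially)
  have seq: "\<exists>s. (\<forall>n. s n \<in> H) \<and> s \<longlonglongrightarrow> u" for u
  proof -
    have "u \<in> closure H" using H_dense by simp
    then show ?thesis unfolding closure_sequential by blast
  qed
  have ga: "g (u + v) = g u + g v" for u v
  proof -
    obtain s t where s: "\<And>n. s n \<in> H" "s \<longlonglongrightarrow> u" and t: "\<And>n. t n \<in> H" "t \<longlonglongrightarrow> v" using seq by metis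
    have "(\<lambda>n. g (s n + t n)) \<longlonglongrightarrow> g (u + v)" by (rule gt) (intro tendsto_add s t)
    moreover have "(\<lambda>n. g (s n + t n)) = (\<lambda>n. g (s n) + g (t n))"
    proof
      fix n show "g (s n + t n) = g (s n) + g (t n)"
        using gH[of "s n + t n"] gH[of "s n"] gH[of "t n"] ff_add2 H_add s t x by simp
    qed
    moreover have "(\<lambda>n. g (s n) + g (t n)) \<longlonglongrightarrow> g u + g v" by (intro tendsto_add gt s t)
    ultimately show ?thesis using LIMSEQ_unique by metis
  qed
  have gs: "g (sm c u) = cnj c * g u" for c u
  proof -
    obtain s where s: "\<And>n. s n \<in> H" "s \<longlonglongrightarrow> u" using seq by metis
    have "(\<lambda>n. g (sm c (s n))) \<longlonglongrightarrow> g (sm c u)" by (rule gt) (intro sm_tendsto s)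
    moreover have "(\<lambda>n. g (sm c (s n))) = (\<lambda>n. cnj c * g (s n))"
    proof
      fix n show "g (sm c (s n)) = cnj c * g (s n)"
        using gH[of "sm c (s n)"] gH[of "s n"] ff_sm2 H_sm s x by simp
    qed
    moreover have "(\<lambda>n. cnj c * g (s n)) \<longlonglongrightarrow> cnj c * g u" by (intro tendsto_mult tendsto_const gt s)
    ultimately show ?thesis using LIMSEQ_unique by metis
  qed
  have "g \<in> cdual sm" unfolding cdual_def using ga gs gc by blast
  then show ?thesis using gH by metis
qed

lemma cont_bound:
  assumes x: "x \<in> H" and c: "continuous_on H (\<lambda>y. ff x y)"
  shows "\<exists>K. \<forall>y\<in>H. cmod (ff x y) \<le> K * norm y"
proof -
  obtain d where d: "d > 0" "\<And>y. y \<in> H \<Longrightarrow> dist y 0 < d \<Longrightarrow> dist (ff x y) (ff x 0) < 1"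
    using c H_0 unfolding continuous_on_iff by (meson zero_less_one)
  show ?thesis
    by (rule bound_from_small[where d=d]) (use d ff_0_2[OF x] H_scaleR ff_scaleR2[OF x] in auto)
qed

lemma FV:
  assumes x: "x \<in> odom FF"
  shows "oapp FF x \<in> cdual sm" "\<And>y. y \<in> H \<Longrightarrow> oapp FF x y = ff x y"
proof -
  have xH: "x \<in> H" and c: "continuous_on H (\<lambda>y. ff x y)" using x FF_dom by auto
  obtain K where K: "\<And>y. y \<in> H \<Longrightarrow> cmod (ff x y) \<le> K * norm y" using cont_bound[OF xH c] by blast
  obtain z where z: "z \<in> cdual sm" "\<And>y. y \<in> H \<Longrightarrow> z y = ff x y" using ext_lemma[OF xH K] by blast
  have u: "\<And>w. w \<in> cdual sm \<and> (\<forall>y\<in>H. w y = ff x y) \<Longrightarrow> w = z"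
    using cdual_unique_dense[OF H_dense] z by metis
  have "oapp FF x = z" unfolding FF_app by (rule the_equality) (use z u in auto)
  then show "oapp FF x \<in> cdual sm" "\<And>y. y \<in> H \<Longrightarrow> oapp FF x y = ff x y" using z by auto
qed

lemma FF_dom_H: "x \<in> odom FF \<Longrightarrow> x \<in> H" using FF_dom by auto

lemma cont_of_bound:
  assumes x: "x \<in> H" and K: "\<And>y. y \<in> H \<Longrightarrow> cmod (ff x y) \<le> K * norm y"
  shows "continuous_on H (\<lambda>y. ff x y)"
  unfolding continuous_on_iff
proof (intro ballI allI impI)
  fix y e assume y: "y \<in> H" and e: "(e::real) > 0"
  define K' where "K' = \<bar>K\<bar> + 1"
  have K'p: "K' > 0" by (simp add: K'_def add_nonneg_pos)
  show "\<exists>d>0. \<forall>y'\<in>H. dist y' y < d \<longrightarrow> dist (ff x y') (ff x y) < e"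
  proof (intro exI[of _ "e / K'"] conjI ballI impI)
    show "e / K' > 0" using e K'p by simp
    fix y' assume y': "y' \<in> H" "dist y' y < e / K'"
    have "dist (ff x y') (ff x y) = cmod (ff x (y' - y))" using ff_diff2 x y y' by (simp add: dist_norm)
    also have "\<dots> \<le> K * norm (y' - y)" using K H_diff y y' by blast
    also have "\<dots> \<le> K' * norm (y' - y)" by (intro mult_right_mono) (auto simp: K'_def)
    also have "\<dots> < K' * (e / K')" using y'(2) K'p by (intro mult_strict_left_mono) (auto simp: dist_norm)
    also have "\<dots> = e" using K'p by simp
    finally show "dist (ff x y') (ff x y) < e" .
  qed
qed

lemma D_FF: assumes x: "x \<in> DT" shows "x \<in> odom FF" "oapp FF x = ap x"
proof -
  have xH: "x \<in> H" using D_H x by blast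
  obtain K where K: "\<And>y. cmod (ap x y) \<le> K * norm y" using cdual_bounded[OF ap_cdual[OF x]] by blast
  have "continuous_on H (\<lambda>y. ff x y)"
    by (rule cont_of_bound[OF xH]) (use K ff_D[OF x] in simp)
  then show xF: "x \<in> odom FF" using xH FF_dom by simp
  show "oapp FF x = ap x"
    by (rule cdual_unique_dense[OF H_dense FV(1)[OF xF] ap_cdual[OF x]]) (simp add: FV(2)[OF xF] ff_D[OF x])
qed

lemma FF_is_op: "is_op sm FF"
proof -
  have d0: "0 \<in> odom FF" using D_FF dom0 by blast
  have dadd: "x + y \<in> odom FF" if A: "x \<in> odom FF" "y \<in> odom FF" for x y
  proof -
    have xy: "x \<in> H" "y \<in> H" using A FF_dom_H by auto
    obtain K1 where K1: "\<And>z. cmod (oapp FF x z) \<le> K1 * norm z" using cdual_bounded[OF FV(1)[OF A(1)]] by blast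
    obtain K2 where K2: "\<And>z. cmod (oapp FF y z) \<le> K2 * norm z" using cdual_bounded[OF FV(1)[OF A(2)]] by blast
    have "continuous_on H (\<lambda>z. ff (x + y) z)"
    proof (rule cont_of_bound[OF H_add[OF xy]])
      fix z assume z: "z \<in> H"
      have "ff (x + y) z = oapp FF x z + oapp FF y z" using ff_add1 xy z FV(2) A by simp
      then have "cmod (ff (x + y) z) \<le> cmod (oapp FF x z) + cmod (oapp FF y z)" by (simp add: norm_triangle_ineq)
      also have "\<dots> \<le> K1 * norm z + K2 * norm z" using K1 K2 by (intro add_mono)
      finally show "cmod (ff (x + y) z) \<le> (K1 + K2) * norm z" by (simp add: algebra_simps)
    qed
    then show ?thesis using FF_dom H_add[OF xy] by simp
  qed
  have dsm: "sm c x \<in> odom FF" if A: "x \<in> odom FF" for c x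
  proof -
    have xH: "x \<in> H" using A FF_dom_H by auto
    obtain K1 where K1: "\<And>z. cmod (oapp FF x z) \<le> K1 * norm z" using cdual_bounded[OF FV(1)[OF A]] by blast
    have "continuous_on H (\<lambda>z. ff (sm c x) z)"
    proof (rule cont_of_bound[OF H_sm[OF xH]])
      fix z assume z: "z \<in> H"
      have "ff (sm c x) z = c * oapp FF x z" using ff_sm1 xH z FV(2) A by simp
      then have "cmod (ff (sm c x) z) = cmod c * cmod (oapp FF x z)" by (simp add: norm_mult)
      also have "\<dots> \<le> cmod c * (K1 * norm z)" using K1 by (intro mult_left_mono) auto
      finally show "cmod (ff (sm c x) z) \<le> (cmod c * K1) * norm z" by (simp add: algebra_simps)
    qed
    then show ?thesis using FF_dom H_sm[OF xH] by simp
  qed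
  have vadd: "oapp FF (x + y) = (\<lambda>z. oapp FF x z + oapp FF y z)" if "x \<in> odom FF" "y \<in> odom FF" for x y
  proof (rule cdual_unique_dense[OF H_dense FV(1)[OF dadd[OF that]]])
    show "(\<lambda>z. oapp FF x z + oapp FF y z) \<in> cdual sm"
      using FV(1)[OF that(1)] FV(1)[OF that(2)] unfolding cdual_def
      by (auto simp: algebra_simps intro: continuous_on_add)
    fix z assume "z \<in> H"
    then show "oapp FF (x + y) z = oapp FF x z + oapp FF y z"
      using FV(2) dadd[OF that] that ff_add1 FF_dom_H by simp
  qed
  have vsm: "oapp FF (sm c x) = (\<lambda>z. c * oapp FF x z)" if "x \<in> odom FF" for c x
  proof (rule cdual_unique_dense[OF H_dense FV(1)[OF dsm[OF that]]])
    show "(\<lambda>z. c * oapp FF x z) \<in> cdual sm"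
      using FV(1)[OF that] unfolding cdual_def
      by (auto simp: algebra_simps intro: continuous_on_mult_left)
    fix z assume "z \<in> H"
    then show "oapp FF (sm c x) z = c * oapp FF x z"
      using FV(2) dsm[OF that] that ff_sm1 FF_dom_H by simp
  qed
  show ?thesis unfolding is_op_def using d0 dadd dsm FV(1) vadd vsm by blast
qed

lemma FF_diag: "x \<in> odom FF \<Longrightarrow> oapp FF x x = ff x x"
  using FV(2) FF_dom_H by blast

lemma FF_positive: "positive_op FF"
  unfolding positive_op_def
proof
  fix x assume x: "x \<in> odom FF"
  have xH: "x \<in> H" using FF_dom_H x by blast
  show "Im (oapp FF x x) = 0 \<and> 0 \<le> Re (oapp FF x x)"
    using FF_diag[OF x] ff_diag[OF xH] gpos
    by (simp add: order_trans[OF mult_nonneg_nonneg[OF less_imp_le[OF gpos] zero_le_power2]])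
qed

lemma FF_extends: "extends FF a"
  unfolding extends_def using D_FF by blast

end

sublocale fr \<subseteq> Fp: posop sm "friedrichs sm a"
  by unfold_locales (rule FF_is_op, rule FF_positive)



context fr begin

lemma riesz:
  fixes \<phi> :: "'a \<Rightarrow> complex"
  assumes padd: "\<And>x y. x \<in> DT \<Longrightarrow> y \<in> DT \<Longrightarrow> \<phi> (x + y) = \<phi> x + \<phi> y"
    and psm: "\<And>c x. x \<in> DT \<Longrightarrow> \<phi> (sm c x) = c * \<phi> x"
    and pb: "\<And>x. x \<in> DT \<Longrightarrow> cmod (\<phi> x) \<le> Cb * nT x"
  shows "\<exists>h s. fr_approx a h s \<and> (\<forall>x\<in>DT. ap x h = \<phi> x)"
proof -
  define E where "E x = Re (ap x x) - 2 * Re (\<phi> x)" for x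
  have psc: "\<phi> (r *\<^sub>R x) = complex_of_real r * \<phi> x" if "x \<in> DT" for r x
    using psm[OF that, of "complex_of_real r"] sm_real by simp
  have Elow: "- (Cb^2) \<le> E x" if x: "x \<in> DT" for x
  proof -
    have "Re (\<phi> x) \<le> Cb * nT x" using pb[OF x] complex_Re_le_cmod order_trans by blast
    moreover have "Re (ap x x) = (nT x)^2" using nT_sq[OF x] by simp
    moreover have "0 \<le> (nT x - Cb)^2" by simp
    ultimately show ?thesis unfolding E_def by (simp add: power2_eq_square algebra_simps)
  qed
  define m where "m = Inf (E ` DT)"
  have ne: "E ` DT \<noteq> {}" using dom0 by blast
  have bb: "bdd_below (E ` DT)" using Elow by (intro bdd_belowI[of _ "- (Cb^2)"]) auto
  have mle: "m \<le> E x" if "x \<in> DT" for x unfolding m_def using bb that by (simp add: cInf_lower)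
  have "\<exists>x\<in>DT. E x < m + inverse (real (Suc n))" for n
  proof -
    have "Inf (E ` DT) < m + inverse (real (Suc n))" unfolding m_def by simp
    then show ?thesis using cInf_less_iff[OF ne bb] by auto
  qed
  then obtain s where sD: "\<And>n. s n \<in> DT" and sE: "\<And>n. E (s n) < m + inverse (real (Suc n))" by metis
  have par: "(nT (x - y))^2 \<le> 2 * E x + 2 * E y - 4 * m" if x: "x \<in> DT" and y: "y \<in> DT" for x y
  proof -
    define z where "z = (1/2) *\<^sub>R (x + y)"
    have xy: "x + y \<in> DT" using dom_add x y by blast
    have zD: "z \<in> DT" unfolding z_def using dom_scaleR xy by blast
    have Qz: "Re (ap z z) = (1/4) * Re (ap (x + y) (x + y))"
      unfolding z_def using ap_scaleR[OF xy] ap2_scaleR[OF xy] by simp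
    have pz: "Re (\<phi> z) = (1/2) * (Re (\<phi> x) + Re (\<phi> y))"
      unfolding z_def using psc[OF xy] padd[OF x y] by simp
    have "m \<le> E z" by (rule mle[OF zD])
    moreover have "(nT (x - y))^2 = Re (ap (x - y) (x - y))" using nT_sq dom_diff x y by simp
    moreover note expand_re[OF x y]
    ultimately show ?thesis unfolding E_def using Qz pz by (simp, linarith)
  qed
  have sbound: "(nT (s i - s j))^2 \<le> 2 * inverse (real (Suc i)) + 2 * inverse (real (Suc j))" for i j
    using par[OF sD sD, of i j] sE[of i] sE[of j] by simp
  have ac: "acauchy s"
    unfolding acauchy_def
  proof (intro conjI allI impI)
    fix n show "s n \<in> DT" by (rule sD)
  next
    fix e :: real assume e: "e > 0"
    obtain N :: nat where N: "4 / e^2 < real N" using reals_Archimedean2 by blast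
    show "\<exists>N. \<forall>i\<ge>N. \<forall>j\<ge>N. nT (s i - s j) < e"
    proof (intro exI[of _ N] allI impI)
      fix i j assume ij: "i \<ge> N" "j \<ge> N"
      have "inverse (real (Suc i)) \<le> inverse (real (Suc N))" using ij by (simp add: field_simps)
      moreover have "inverse (real (Suc j)) \<le> inverse (real (Suc N))" using ij by (simp add: field_simps)
      moreover have "4 * inverse (real (Suc N)) < e^2"
      proof -
        have "4 / e^2 < real (Suc N)" using N by simp
        then have "4 < e^2 * real (Suc N)" using e by (simp add: field_simps)
        then show ?thesis by (simp add: field_simps)
      qed
      ultimately have "(nT (s i - s j))^2 < e^2" using sbound[of i j] by linarith
      then show "nT (s i - s j) < e" using e by (simp add: power_less_imp_less_base less_imp_le)
    qed
  qed
  obtain h where h: "s \<longlonglongrightarrow> h" using acauchy_conv[OF ac] by blast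
  have fa: "fr_approx a h s" using ac h by (simp add: fr_approx_iff)
  have "ap x h = \<phi> x" if x: "x \<in> DT" for x
  proof -
    define Q where "Q = Re (ap x x)"
    have Q0: "Q \<ge> 0" using Re_diag[OF x] Q_def by simp
    define q where "q n = sqrt (inverse (real (Suc n)))" for n
    have qp: "q n > 0" for n by (simp add: q_def)
    have q2: "(q n)^2 = inverse (real (Suc n))" for n by (simp add: q_def)
    have Eexp: "E (u + sm t x) = E u + 2 * Re (t * (ap x u - \<phi> x)) + (cmod t)^2 * Q" if u: "u \<in> DT" for u t
    proof -
      have "Re (ap (u + sm t x) (u + sm t x)) = Re (ap u u) + 2 * Re (cnj t * ap u x) + (cmod t)^2 * Q"
        using expand_sm[OF u x] Q_def by simp
      moreover have "Re (cnj t * ap u x) = Re (t * ap x u)"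
      proof -
        have "ap x u = cnj (ap u x)" by (rule herm[OF u x])
        then have "t * ap x u = cnj (cnj t * ap u x)" by simp
        then have "Re (t * ap x u) = Re (cnj (cnj t * ap u x))" by (simp only:)
        then show ?thesis by (metis cnj.sel(1))
      qed
      moreover have "\<phi> (u + sm t x) = \<phi> u + t * \<phi> x" using padd[OF u dom_sm[OF x]] psm[OF x] by simp
      ultimately show ?thesis unfolding E_def by (simp add: algebra_simps)
    qed
    have dbound: "cmod (ap x (s n) - \<phi> x) \<le> q n * (1 + Q) / 2" for n
    proof (cases "ap x (s n) - \<phi> x = 0")
      case True then show ?thesis using qp[of n] Q0 by simp
    next
      case False
      define d where "d = ap x (s n) - \<phi> x"
      have dn: "cmod d > 0" using False d_def by simp
      define t where "t = - complex_of_real (q n / cmod d) * cnj d"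
      have Rtd: "Re (t * d) = - q n * cmod d"
      proof -
        have "t * d = - complex_of_real (q n / cmod d) * (cnj d * d)" by (simp add: t_def)
        also have "cnj d * d = complex_of_real ((cmod d)^2)" using complex_norm_square[of d] by (simp add: mult.commute)
        finally have "t * d = complex_of_real (- (q n / cmod d) * (cmod d)^2)" by simp
        then show ?thesis using dn by (simp add: power2_eq_square)
      qed
      have ct: "(cmod t)^2 = (q n)^2" using dn qp[of n] by (simp add: t_def norm_mult norm_divide)
      have "m \<le> E (s n + sm t x)" using mle dom_add[OF sD dom_sm[OF x]] by blast
      also have "\<dots> = E (s n) + 2 * Re (t * d) + (cmod t)^2 * Q" using Eexp[OF sD] d_def by simp
      finally have "m \<le> E (s n) - 2 * q n * cmod d + (q n)^2 * Q" using Rtd ct by simp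
      then have "2 * q n * cmod d \<le> (q n)^2 * (1 + Q)" using sE[of n] q2[of n] by (simp add: algebra_simps)
      then have "q n * (2 * cmod d) \<le> q n * (q n * (1 + Q))" by (simp add: power2_eq_square algebra_simps)
      then have "2 * cmod d \<le> q n * (1 + Q)" using qp[of n] by simp
      then show ?thesis using d_def by simp
    qed
    have q0: "q \<longlonglongrightarrow> 0"
    proof -
      have "(\<lambda>n. sqrt (inverse (real (Suc n)))) \<longlonglongrightarrow> sqrt 0"
        by (intro tendsto_intros LIMSEQ_inverse_real_of_nat)
      then show ?thesis by (simp add: q_def[abs_def])
    qed
    have g: "(\<lambda>n. q n * (1 + Q) / 2) \<longlonglongrightarrow> 0"
      by (intro tendsto_divide_zero tendsto_mult_left_zero q0)
    have ev: "\<forall>\<^sub>F n in sequentially. norm (ap x (s n) - \<phi> x) \<le> q n * (1 + Q) / 2"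
      using dbound by simp
    have "(\<lambda>n. ap x (s n) - \<phi> x) \<longlonglongrightarrow> 0" by (rule Lim_null_comparison[OF ev g])
    then have "(\<lambda>n. ap x (s n)) \<longlonglongrightarrow> \<phi> x" by (simp add: LIM_zero_iff)
    moreover have "(\<lambda>n. ap x (s n)) \<longlonglongrightarrow> ap x h" by (rule ap2_tendsto[OF x h])
    ultimately show ?thesis using LIMSEQ_unique by blast
  qed
  then show ?thesis using fa by blast
qed

end


context posop begin

lemma hA_cauchy_lim:
  assumes s: "hA_cauchy T s"
  shows "\<exists>l. (\<lambda>n. nT (s n)) \<longlonglongrightarrow> l \<and> Re (lim (\<lambda>n. ap (s n) (s n))) = l^2 \<and> l \<ge> 0"
proof -
  have d: "\<And>n. s n \<in> DT" using s by (simp add: hA_cauchy_def)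
  have c: "\<And>e. e > 0 \<Longrightarrow> \<exists>N. \<forall>m\<ge>N. \<forall>n\<ge>N. nT (s m - s n) < e"
    using s by (simp add: hA_cauchy_def nT_def)
  have "Cauchy (\<lambda>n. nT (s n))"
    unfolding Cauchy_def
  proof (intro allI impI)
    fix e :: real assume e: "e > 0"
    obtain N where N: "\<forall>m\<ge>N. \<forall>n\<ge>N. nT (s m - s n) < e" using c[OF e] by blast
    show "\<exists>M. \<forall>m\<ge>M. \<forall>n\<ge>M. dist (nT (s m)) (nT (s n)) < e"
    proof (intro exI[of _ N] allI impI)
      fix m n assume "m \<ge> N" "n \<ge> N"
      then have "nT (s m - s n) < e" using N by blast
      moreover have "\<bar>nT (s m) - nT (s n)\<bar> \<le> nT (s m - s n)" by (rule nT_rev_triangle[OF d d])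
      ultimately show "dist (nT (s m)) (nT (s n)) < e" by (simp add: dist_real_def)
    qed
  qed
  then obtain l where l: "(\<lambda>n. nT (s n)) \<longlonglongrightarrow> l" using Cauchy_convergent_iff convergent_def by blast
  have eq: "(\<lambda>n. ap (s n) (s n)) = (\<lambda>n. complex_of_real ((nT (s n))^2))"
  proof
    fix n show "ap (s n) (s n) = complex_of_real ((nT (s n))^2)"
      using diag_real[OF d[of n]] nT_sq[OF d[of n]] by simp
  qed
  have "(\<lambda>n. ap (s n) (s n)) \<longlonglongrightarrow> complex_of_real (l^2)"
    unfolding eq by (intro tendsto_intros l)
  then have "lim (\<lambda>n. ap (s n) (s n)) = complex_of_real (l^2)" by (rule limI)
  moreover have "l \<ge> 0" by (rule LIMSEQ_le_const[OF l]) (use nT_nonneg d in auto)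
  ultimately show ?thesis using l by auto
qed

lemma norm2_char:
  assumes "J_adj_rep T y s0"
  shows "\<exists>s l. J_adj_rep T y s \<and> (\<lambda>n. nT (s n)) \<longlonglongrightarrow> l \<and> J_adj_norm2 T y = l^2 \<and> l \<ge> 0"
proof -
  define s where "s = (SOME s. J_adj_rep T y s)"
  have s: "J_adj_rep T y s" unfolding s_def using assms by (metis someI_ex)
  then have "hA_cauchy T s" by (simp add: J_adj_rep_def)
  then obtain l where "(\<lambda>n. nT (s n)) \<longlonglongrightarrow> l" "Re (lim (\<lambda>n. ap (s n) (s n))) = l^2" "l \<ge> 0"
    using hA_cauchy_lim by blast
  then show ?thesis using s unfolding J_adj_norm2_def s_def by blast
qed

end

context fr begin

lemma Fp_nT: "x \<in> odom FF \<Longrightarrow> Fp.nT x = fN x"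
  by (simp add: Fp.nT_def fN_def FF_diag)

lemma Fp_nT_D: "x \<in> DT \<Longrightarrow> Fp.nT x = nT x"
  by (simp add: Fp.nT_def nT_def D_FF)

lemma FF_surj:
  assumes f: "f \<in> cdual sm"
  shows "\<exists>h\<in>odom FF. oapp FF h = f"
proof -
  obtain K where K: "\<And>x. cmod (f x) \<le> K * norm x" using cdual_bounded[OF f] by blast
  have b: "cmod (cnj (f x)) \<le> (\<bar>K\<bar> / sqrt \<gamma>) * nT x" if x: "x \<in> DT" for x
  proof -
    have "cmod (f x) \<le> \<bar>K\<bar> * norm x" using K[of x] by (meson abs_ge_self mult_right_mono norm_ge_zero order_trans)
    also have "\<dots> \<le> \<bar>K\<bar> * (nT x / sqrt \<gamma>)" using norm_le_nT'[OF x] by (intro mult_left_mono) auto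
    finally show ?thesis by simp
  qed
  obtain h s where hs: "fr_approx a h s" and hD: "\<And>x. x \<in> DT \<Longrightarrow> ap x h = cnj (f x)"
    using riesz[of "\<lambda>x. cnj (f x)" "\<bar>K\<bar> / sqrt \<gamma>"] b cdualD[OF f] by auto
  have hH: "h \<in> H" using hs H_iff by blast
  have eqD: "ff h y = f y" if y: "y \<in> DT" for y
  proof -
    have "ff h y = cnj (ff y h)" using ff_herm[OF D_H[OF y] hH] by simp
    also have "ff y h = ap y h" by (rule ff_D[OF y hH])
    finally show ?thesis using hD[OF y] by simp
  qed
  have eqH: "ff h y = f y" if y: "y \<in> H" for y
  proof -
    obtain t where t: "fr_approx a y t" using y H_iff by blast
    have td: "\<And>n. t n \<in> DT" and ty: "t \<longlonglongrightarrow> y" using t by (auto simp: fr_approx_iff acauchy_def)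
    have "(\<lambda>n. ff h (t n)) \<longlonglongrightarrow> ff h y" by (rule approx_ff2[OF t hH])
    moreover have "(\<lambda>n. ff h (t n)) = (\<lambda>n. f (t n))" using eqD td by auto
    moreover have "(\<lambda>n. f (t n)) \<longlonglongrightarrow> f y" by (rule cdual_tendsto[OF f ty])
    ultimately show ?thesis using LIMSEQ_unique by metis
  qed
  have "continuous_on H (\<lambda>y. ff h y)"
  proof -
    have "continuous_on H f" using cdualD(3)[OF f] continuous_on_subset by blast
    then show ?thesis using eqH continuous_on_cong by force
  qed
  then have hF: "h \<in> odom FF" using hH FF_dom by simp
  have "oapp FF h = f"
    by (rule cdual_unique_dense[OF H_dense FV(1)[OF hF] f]) (simp add: FV(2)[OF hF] eqH)
  then show ?thesis using hF by blast
qed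

lemma J_lemma:
  assumes y: "y \<in> J_adj_dom FF"
  shows "\<exists>h s. fr_approx a h s \<and> (\<forall>x\<in>odom FF. oapp FF x y = oapp FF x h)"
proof -
  have Jc: "\<And>x0 e. x0 \<in> odom FF \<Longrightarrow> e > 0 \<Longrightarrow> \<exists>d>0. \<forall>x\<in>odom FF. Fp.nT (x - x0) < d \<longrightarrow> cmod (oapp FF x y - oapp FF x0 y) < e"
    using y unfolding J_adj_dom_def Fp.nT_def by blast
  obtain d where d: "d > 0" "\<And>x. x \<in> odom FF \<Longrightarrow> Fp.nT (x - 0) < d \<Longrightarrow> cmod (oapp FF x y - oapp FF 0 y) < 1"
    using Jc[OF Fp.dom0, of 1] by auto
  have "\<exists>K. \<forall>x\<in>DT. cmod (ap x y) \<le> K * nT x"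
  proof (rule bound_from_small[where d=d])
    fix x assume x: "x \<in> DT"
    have "cmod (oapp FF x y - oapp FF 0 y) < 1" if "nT x < d"
      using d(2)[of x] D_FF[OF x] Fp_nT_D[OF x] that by simp
    then show "nT x < d \<Longrightarrow> cmod (ap x y) < 1" using D_FF[OF x] Fp.ap_0' by simp
  qed (use d dom_scaleR ap_scaleR nT_scaleR nT_nonneg in auto)
  then obtain K where K: "\<And>x. x \<in> DT \<Longrightarrow> cmod (ap x y) \<le> K * nT x" by blast
  obtain h s where hs: "fr_approx a h s" and hD: "\<And>x. x \<in> DT \<Longrightarrow> ap x h = ap x y"
    using riesz[of "\<lambda>x. ap x y" K] K ap_add ap_sm by auto
  have hH: "h \<in> H" using hs H_iff by blast
  have "oapp FF x y = oapp FF x h" if x: "x \<in> odom FF" for x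
  proof -
    have xH: "x \<in> H" using FF_dom_H x by blast
    obtain t where t: "fr_approx a x t" using xH H_iff by blast
    have td: "\<And>n. t n \<in> DT" using t by (auto simp: fr_approx_iff acauchy_def)
    have tF: "\<And>n. t n \<in> odom FF" using D_FF td by blast
    have l1: "(\<lambda>n. ff (t n) h) \<longlonglongrightarrow> ff x h" by (rule approx_ff1[OF t hH])
    have e1: "ff (t n) h = ap (t n) y" for n using ff_D[OF td hH] hD[OF td] by simp
    have fl: "(\<lambda>n. fN (x - t n)) \<longlonglongrightarrow> 0" by (rule approx_fN[OF t])
    have l2: "(\<lambda>n. ap (t n) y) \<longlonglongrightarrow> oapp FF x y"
      unfolding lim_sequentially
    proof (intro allI impI)
      fix e :: real assume e: "e > 0"
      obtain d where d: "d > 0" "\<And>x'. x' \<in> odom FF \<Longrightarrow> Fp.nT (x' - x) < d \<Longrightarrow> cmod (oapp FF x' y - oapp FF x y) < e"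
        using Jc[OF x e] by blast
      obtain N where N: "\<And>n. n \<ge> N \<Longrightarrow> dist (fN (x - t n)) 0 < d" using fl d(1) unfolding lim_sequentially by blast
      show "\<exists>no. \<forall>n\<ge>no. dist (ap (t n) y) (oapp FF x y) < e"
      proof (intro exI[of _ N] allI impI)
        fix n assume n: "n \<ge> N"
        have "Fp.nT (t n - x) = Fp.nT (x - t n)" by (rule Fp.nT_commute[OF tF x])
        also have "\<dots> = fN (x - t n)" by (rule Fp_nT[OF Fp.dom_diff[OF x tF]])
        finally have "Fp.nT (t n - x) < d" using N[OF n] fN_nonneg[OF H_diff[OF xH D_H[OF td]]] by simp
        then have "cmod (oapp FF (t n) y - oapp FF x y) < e" using d(2)[OF tF] by blast
        then show "dist (ap (t n) y) (oapp FF x y) < e" using D_FF[OF td] by (simp add: dist_norm)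
      qed
    qed
    have "ff x h = oapp FF x y" using l1 l2 e1 LIMSEQ_unique by (metis (no_types, lifting) ext)
    then show ?thesis using FV(2)[OF x hH] by simp
  qed
  then show ?thesis using hs by blast
qed

lemma FF_self_adjoint: "self_adjoint sm FF"
proof -
  have closF: "closure (odom FF) = UNIV"
    using dense closure_mono[of DT "odom FF"] D_FF by blast
  have dom1: "continuous_on (odom FF) (\<lambda>x. oapp FF x y)" if y: "y \<in> odom FF" for y
  proof -
    have "continuous_on (odom FF) (\<lambda>x. cnj (oapp FF y x))"
      by (intro continuous_intros continuous_on_subset[OF cdualD(3)[OF FV(1)[OF y]]]) auto
    moreover have "\<And>x. x \<in> odom FF \<Longrightarrow> cnj (oapp FF y x) = oapp FF x y"
      using Fp.herm[OF y] by simp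
    ultimately show ?thesis using continuous_on_cong by force
  qed
  have dom2: "y \<in> odom FF" if c: "continuous_on (odom FF) (\<lambda>x. oapp FF x y)" for y
  proof -
    have yJ: "y \<in> J_adj_dom FF"
      unfolding J_adj_dom_def
    proof (intro CollectI ballI allI impI)
      fix x0 and e :: real assume x0: "x0 \<in> odom FF" and e: "e > 0"
      obtain d where d: "d > 0" "\<And>x. x \<in> odom FF \<Longrightarrow> dist x x0 < d \<Longrightarrow> dist (oapp FF x y) (oapp FF x0 y) < e"
        using c x0 e unfolding continuous_on_iff by blast
      show "\<exists>d>0. \<forall>x\<in>odom FF. sqrt (Re (oapp FF (x - x0) (x - x0))) < d \<longrightarrow> cmod (oapp FF x y - oapp FF x0 y) < e"
      proof (intro exI[of _ "d * sqrt \<gamma>"] conjI ballI impI)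
        show "d * sqrt \<gamma> > 0" using d gpos by simp
        fix x assume x: "x \<in> odom FF" and lt: "sqrt (Re (oapp FF (x - x0) (x - x0))) < d * sqrt \<gamma>"
        have xx: "x - x0 \<in> odom FF" using Fp.dom_diff x x0 by blast
        have "sqrt \<gamma> * norm (x - x0) \<le> fN (x - x0)" by (rule norm_le_fN[OF FF_dom_H[OF xx]])
        also have "fN (x - x0) = sqrt (Re (oapp FF (x - x0) (x - x0)))" using Fp_nT[OF xx] by (simp add: Fp.nT_def)
        finally have "sqrt \<gamma> * norm (x - x0) < sqrt \<gamma> * d" using lt by (simp add: mult.commute)
        then have "dist x x0 < d" using gpos by (simp add: dist_norm)
        then show "cmod (oapp FF x y - oapp FF x0 y) < e" using d(2)[OF x] by (simp add: dist_norm)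
      qed
    qed
    obtain h s where hs: "fr_approx a h s" and hF: "\<And>x. x \<in> odom FF \<Longrightarrow> oapp FF x y = oapp FF x h"
      using J_lemma[OF yJ] by blast
    have hH: "h \<in> H" using hs H_iff by blast
    have yh: "y = h"
    proof (rule cdual_separate)
      fix f assume f: "f \<in> cdual sm"
      obtain w where w: "w \<in> odom FF" "oapp FF w = f" using FF_surj[OF f] by blast
      show "f y = f h" using hF[OF w(1)] w(2) by simp
    qed
    have yH: "y \<in> H" using yh hH by simp
    obtain d where d: "d > 0" "\<And>x. x \<in> odom FF \<Longrightarrow> dist x 0 < d \<Longrightarrow> dist (oapp FF x y) (oapp FF 0 y) < 1"
      using c Fp.dom0 unfolding continuous_on_iff by (meson zero_less_one)
    have "\<exists>K. \<forall>x\<in>odom FF. cmod (oapp FF x y) \<le> K * norm x"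
      by (rule bound_from_small[where d=d]) (use d Fp.dom_scaleR Fp.ap_scaleR Fp.ap_0' in auto)
    then obtain K where K: "\<And>x. x \<in> odom FF \<Longrightarrow> cmod (oapp FF x y) \<le> K * norm x" by blast
    have Kb: "cmod (ff y u) \<le> K * norm u" if u: "u \<in> H" for u
    proof -
      obtain t where t: "fr_approx a u t" using u H_iff by blast
      have td: "\<And>n. t n \<in> DT" and tu: "t \<longlonglongrightarrow> u" using t by (auto simp: fr_approx_iff acauchy_def)
      have l1: "(\<lambda>n. cmod (ff (t n) y)) \<longlonglongrightarrow> cmod (ff u y)" by (intro tendsto_intros approx_ff1[OF t yH])
      have l2: "(\<lambda>n. K * norm (t n)) \<longlonglongrightarrow> K * norm u" by (intro tendsto_intros tu)
      have "cmod (ff u y) \<le> K * norm u"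
      proof (rule LIMSEQ_le[OF l1 l2], intro exI allI impI)
        fix n
        have "ff (t n) y = oapp FF (t n) y" using ff_D[OF td yH] D_FF[OF td] by simp
        then show "cmod (ff (t n) y) \<le> K * norm (t n)" using K D_FF(1)[OF td] by simp
      qed
      then show ?thesis using ff_herm[OF yH u] by simp
    qed
    have "continuous_on H (\<lambda>u. ff y u)" by (rule cont_of_bound[OF yH Kb])
    then show ?thesis using yH FF_dom by simp
  qed
  have domeq: "odom FF = odom (adj sm FF)"
    unfolding adj_def odom_def[of "(_, _)"] using dom1 dom2 by auto
  have vals: "oapp FF x = oapp (adj sm FF) x" if x: "x \<in> odom FF" for x
  proof -
    have P: "oapp FF x \<in> cdual sm \<and> (\<forall>x'\<in>odom FF. cnj (oapp FF x x') = oapp FF x' x)"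
      using FV(1)[OF x] Fp.herm[OF x] by simp
    have U: "z = oapp FF x" if "z \<in> cdual sm \<and> (\<forall>x'\<in>odom FF. cnj (z x') = oapp FF x' x)" for z
    proof (rule cdual_unique_dense[OF closF])
      show "z \<in> cdual sm" "oapp FF x \<in> cdual sm" using that FV(1)[OF x] by auto
      fix x' assume x': "x' \<in> odom FF"
      have "cnj (z x') = cnj (oapp FF x x')" using that x' Fp.herm[OF x x'] by simp
      then show "z x' = oapp FF x x'" by simp
    qed
    have "oapp (adj sm FF) x = (THE z. z \<in> cdual sm \<and> (\<forall>x'\<in>odom FF. cnj (z x') = oapp FF x' x))"
      by (simp add: adj_def oapp_def)
    also have "\<dots> = oapp FF x"
      by (rule the_equality[where P="\<lambda>z. z \<in> cdual sm \<and> (\<forall>x'\<in>odom FF. cnj (z x') = oapp FF x' x)"])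
         (use P U in blast)+
    finally show ?thesis by simp
  qed
  show ?thesis unfolding self_adjoint_def op_eq_def using domeq vals by blast
qed

end


context fr begin

lemma rep_exists:
  assumes T: "posop sm T" and ext: "extends T a"
    and yh: "\<And>x. x \<in> odom T \<Longrightarrow> oapp T x y = oapp T x h" and t: "fr_approx a h t"
  shows "J_adj_rep T y t"
proof -
  interpret Tp: posop sm T by (rule T)
  have td: "\<And>n. t n \<in> DT" and th: "t \<longlonglongrightarrow> h" and ac: "acauchy t" using t by (auto simp: fr_approx_iff acauchy_def)
  have tT: "\<And>n. t n \<in> odom T" using ext td by (auto simp: extends_def)
  have eqv: "oapp T u = ap u" if "u \<in> DT" for u using ext that by (auto simp: extends_def)
  have "hA_cauchy T t"
    unfolding hA_cauchy_def
  proof (intro conjI allI impI)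
    fix n show "t n \<in> odom T" by (rule tT)
  next
    fix e :: real assume e: "e > 0"
    obtain N where N: "\<And>m n. m \<ge> N \<Longrightarrow> n \<ge> N \<Longrightarrow> nT (t m - t n) < e" using acauchyD(2)[OF ac e] by blast
    show "\<exists>N. \<forall>m\<ge>N. \<forall>n\<ge>N. sqrt (Re (oapp T (t m - t n) (t m - t n))) < e"
    proof (intro exI[of _ N] allI impI)
      fix m n assume "m \<ge> N" "n \<ge> N"
      then show "sqrt (Re (oapp T (t m - t n) (t m - t n))) < e"
        using N eqv[OF dom_diff[OF td td]] by (simp add: nT_def)
    qed
  qed
  moreover have "(\<lambda>n. oapp T x (t n)) \<longlonglongrightarrow> oapp T x y" if x: "x \<in> odom T" for x
    using Tp.ap2_tendsto[OF x th] yh[OF x] by simp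
  ultimately show ?thesis by (simp add: J_adj_rep_def)
qed

lemma FF_ge:
  assumes Aop: "is_op sm A" and Apos: "positive_op A" and ext: "extends A a"
  shows "op_ge FF A"
proof -
  interpret Ap: posop sm A by unfold_locales (rule Aop, rule Apos)
  have AT: "posop sm A" by unfold_locales (rule Aop, rule Apos)
  have FT: "posop sm FF" by unfold_locales (rule FF_is_op, rule FF_positive)
  have eqA: "oapp A u = ap u" if "u \<in> DT" for u using ext that by (auto simp: extends_def)
  have DA: "u \<in> odom A" if "u \<in> DT" for u using ext that by (auto simp: extends_def)
  have main: "y \<in> J_adj_dom A \<and> J_adj_norm2 A y \<le> J_adj_norm2 FF y" if yJ: "y \<in> J_adj_dom FF" for y
  proof -
    obtain h t where ht: "fr_approx a h t" and hF: "\<And>x. x \<in> odom FF \<Longrightarrow> oapp FF x y = oapp FF x h"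
      using J_lemma[OF yJ] by blast
    have hH: "h \<in> H" using ht H_iff by blast
    have td: "\<And>n. t n \<in> DT" and th: "t \<longlonglongrightarrow> h" using ht by (auto simp: fr_approx_iff acauchy_def)
    have hA: "oapp A x y = oapp A x h" if x: "x \<in> odom A" for x
    proof -
      obtain w where w: "w \<in> odom FF" "oapp FF w = oapp A x" using FF_surj[OF Ap.ap_cdual[OF x]] by blast
      show ?thesis using hF[OF w(1)] w(2) by simp
    qed
    have bnd: "cmod (oapp A x h) \<le> fN h * Ap.nT x" if x: "x \<in> odom A" for x
    proof -
      have l1: "(\<lambda>n. cmod (oapp A x (t n))) \<longlonglongrightarrow> cmod (oapp A x h)" by (intro tendsto_intros Ap.ap2_tendsto[OF x th])
      have l2: "(\<lambda>n. nT (t n) * Ap.nT x) \<longlonglongrightarrow> fN h * Ap.nT x" by (intro tendsto_intros approx_nT[OF ht])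
      show ?thesis
      proof (rule LIMSEQ_le[OF l1 l2], intro exI allI impI)
        fix n
        have "oapp A x (t n) = cnj (oapp A (t n) x)" using Ap.herm[OF DA[OF td] x] by simp
        then have "cmod (oapp A x (t n)) = cmod (oapp A (t n) x)" by simp
        also have "\<dots> \<le> Ap.nT (t n) * Ap.nT x" by (rule Ap.cauchy_schwarz[OF DA[OF td] x])
        also have "Ap.nT (t n) = nT (t n)" using eqA[OF td] by (simp add: Ap.nT_def nT_def)
        finally show "cmod (oapp A x (t n)) \<le> nT (t n) * Ap.nT x" .
      qed
    qed
    have fh0: "fN h \<ge> 0" by (rule fN_nonneg[OF hH])
    have yA: "y \<in> J_adj_dom A"
      unfolding J_adj_dom_def
    proof (intro CollectI ballI allI impI)
      fix x0 and e :: real assume x0: "x0 \<in> odom A" and e: "e > 0"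
      show "\<exists>d>0. \<forall>x\<in>odom A. sqrt (Re (oapp A (x - x0) (x - x0))) < d \<longrightarrow> cmod (oapp A x y - oapp A x0 y) < e"
      proof (intro exI[of _ "e / (fN h + 1)"] conjI ballI impI)
        show "e / (fN h + 1) > 0" using e fh0 by simp
        fix x assume x: "x \<in> odom A" and lt: "sqrt (Re (oapp A (x - x0) (x - x0))) < e / (fN h + 1)"
        have xx: "x - x0 \<in> odom A" using Ap.dom_diff x x0 by blast
        have "oapp A x y - oapp A x0 y = oapp A (x - x0) h"
          using hA[OF x] hA[OF x0] Ap.ap_diff[OF x x0] by simp
        then have "cmod (oapp A x y - oapp A x0 y) \<le> fN h * Ap.nT (x - x0)" using bnd[OF xx] by simp
        also have "\<dots> \<le> fN h * (e / (fN h + 1))"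
          using lt fh0 by (intro mult_left_mono) (auto simp: Ap.nT_def)
        also have "\<dots> < e"
        proof -
          have "fN h * (e / (fN h + 1)) = e * (fN h / (fN h + 1))" by simp
          also have "fN h / (fN h + 1) < 1" using fh0 by simp
          then have "e * (fN h / (fN h + 1)) < e * 1" using e by (intro mult_strict_left_mono)
          finally show ?thesis by simp
        qed
        finally show "cmod (oapp A x y - oapp A x0 y) < e" .
      qed
    qed
    have repA: "J_adj_rep A y t" by (rule rep_exists[OF AT ext hA ht])
    have repF: "J_adj_rep FF y t" by (rule rep_exists[OF FT FF_extends hF ht])
    obtain sA lA where sA: "J_adj_rep A y sA" "(\<lambda>n. Ap.nT (sA n)) \<longlonglongrightarrow> lA" "J_adj_norm2 A y = lA^2" "lA \<ge> 0"
      using Ap.norm2_char[OF repA] by blast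
    obtain sF lF where sF: "J_adj_rep FF y sF" "(\<lambda>n. Fp.nT (sF n)) \<longlonglongrightarrow> lF" "J_adj_norm2 FF y = lF^2" "lF \<ge> 0"
      using Fp.norm2_char[OF repF] by blast
    have lAb: "lA \<le> fN h"
    proof (rule field_le_epsilon)
      fix e :: real assume e: "e > 0"
      have sAd: "\<And>n. sA n \<in> odom A" and sAc: "\<And>e. e > 0 \<Longrightarrow> \<exists>N. \<forall>m\<ge>N. \<forall>n\<ge>N. Ap.nT (sA m - sA n) < e"
        and sAl: "\<And>x. x \<in> odom A \<Longrightarrow> (\<lambda>n. oapp A x (sA n)) \<longlonglongrightarrow> oapp A x y"
        using sA(1) by (auto simp: J_adj_rep_def hA_cauchy_def Ap.nT_def)
      obtain N where N: "\<And>m n. m \<ge> N \<Longrightarrow> n \<ge> N \<Longrightarrow> Ap.nT (sA m - sA n) < e" using sAc[OF e] by blast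
      have "Ap.nT (sA m) \<le> fN h + e" if m: "m \<ge> N" for m
      proof -
        have sm: "sA m \<in> odom A" by (rule sAd)
        have ineq: "(Ap.nT (sA m))^2 \<le> cmod (oapp A (sA m) (sA n)) + Ap.nT (sA m) * e" if n: "n \<ge> N" for n
        proof -
          have "oapp A (sA m) (sA m) = oapp A (sA m) (sA n) + oapp A (sA m) (sA m - sA n)"
            using Ap.ap2_diff[OF sm] by simp
          then have "Re (oapp A (sA m) (sA m)) \<le> cmod (oapp A (sA m) (sA n)) + cmod (oapp A (sA m) (sA m - sA n))"
            by (metis complex_Re_le_cmod norm_triangle_ineq order_trans)
          moreover have "cmod (oapp A (sA m) (sA m - sA n)) \<le> Ap.nT (sA m) * Ap.nT (sA m - sA n)"
            by (rule Ap.cauchy_schwarz[OF sm Ap.dom_diff[OF sm sAd]])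
          moreover have "Ap.nT (sA m) * Ap.nT (sA m - sA n) \<le> Ap.nT (sA m) * e"
            using N[OF m n] Ap.nT_nonneg[OF sm] by (intro mult_left_mono) auto
          ultimately show ?thesis using Ap.nT_sq[OF sm] by linarith
        qed
        have l: "(\<lambda>n. cmod (oapp A (sA m) (sA n)) + Ap.nT (sA m) * e) \<longlonglongrightarrow> cmod (oapp A (sA m) y) + Ap.nT (sA m) * e"
          by (intro tendsto_intros sAl[OF sm])
        have "(Ap.nT (sA m))^2 \<le> cmod (oapp A (sA m) y) + Ap.nT (sA m) * e"
          by (rule LIMSEQ_le_const[OF l]) (use ineq in blast)
        also have "cmod (oapp A (sA m) y) \<le> fN h * Ap.nT (sA m)" using bnd[OF sm] hA[OF sm] by simp
        then have "cmod (oapp A (sA m) y) + Ap.nT (sA m) * e \<le> Ap.nT (sA m) * (fN h + e)"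
          by (simp add: algebra_simps)
        finally have sq: "Ap.nT (sA m) * Ap.nT (sA m) \<le> Ap.nT (sA m) * (fN h + e)" by (simp add: power2_eq_square)
        show ?thesis
        proof (cases "Ap.nT (sA m) = 0")
          case True then show ?thesis using fh0 e by simp
        next
          case False
          then have "Ap.nT (sA m) > 0" using Ap.nT_nonneg[OF sm] by simp
          then show ?thesis using sq by simp
        qed
      qed
      then show "lA \<le> fN h + e" by (intro LIMSEQ_le_const2[OF sA(2)]) blast
    qed
    have lFb: "fN h \<le> lF"
    proof -
      have sFd: "\<And>n. sF n \<in> odom FF"
        and sFl: "\<And>x. x \<in> odom FF \<Longrightarrow> (\<lambda>n. oapp FF x (sF n)) \<longlonglongrightarrow> oapp FF x y"
        using sF(1) by (auto simp: J_adj_rep_def hA_cauchy_def)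
      have b1: "cmod (ff x h) \<le> fN x * lF" if x: "x \<in> DT" for x
      proof -
        have xF: "x \<in> odom FF" using D_FF[OF x] by blast
        have l1: "(\<lambda>n. cmod (oapp FF x (sF n))) \<longlonglongrightarrow> cmod (oapp FF x y)" by (intro tendsto_intros sFl[OF xF])
        have l2: "(\<lambda>n. Fp.nT x * Fp.nT (sF n)) \<longlonglongrightarrow> Fp.nT x * lF" by (intro tendsto_intros sF(2))
        have "cmod (oapp FF x y) \<le> Fp.nT x * lF"
          by (rule LIMSEQ_le[OF l1 l2]) (use Fp.cauchy_schwarz[OF xF sFd] in blast)
        moreover have "oapp FF x y = ff x h" using hF[OF xF] FV(2)[OF xF hH] by simp
        moreover have "Fp.nT x = fN x" by (rule Fp_nT[OF xF])
        ultimately show ?thesis by simp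
      qed
      have l1: "(\<lambda>n. cmod (ff (t n) h)) \<longlonglongrightarrow> cmod (ff h h)" by (intro tendsto_intros approx_ff1[OF ht hH])
      have l2: "(\<lambda>n. fN (t n) * lF) \<longlonglongrightarrow> fN h * lF"
      proof -
        have "(\<lambda>n. nT (t n) * lF) \<longlonglongrightarrow> fN h * lF" by (intro tendsto_intros approx_nT[OF ht])
        moreover have "nT (t n) = fN (t n)" for n using Fp_nT[OF D_FF(1)[OF td]] Fp_nT_D[OF td] by simp
        ultimately show ?thesis by simp
      qed
      have "cmod (ff h h) \<le> fN h * lF" by (rule LIMSEQ_le[OF l1 l2]) (use b1 td in blast)
      moreover have "cmod (ff h h) = fN h * fN h" using ff_real[OF hH] fh0 by (simp add: power2_eq_square norm_mult)
      ultimately have "fN h * fN h \<le> fN h * lF" by simp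
      then show ?thesis
      proof (cases "fN h = 0")
        case True then show ?thesis using sF(4) by simp
      next
        case False then have "fN h > 0" using fh0 by simp
        then show ?thesis using \<open>fN h * fN h \<le> fN h * lF\<close> by simp
      qed
    qed
    have "lA^2 \<le> lF^2" using lAb lFb sA(4) by (intro power_mono) auto
    then show ?thesis using yA sA(3) sF(3) by simp
  qed
  show ?thesis unfolding op_ge_def using main by blast
qed

end

theorem theorem3:
  fixes sm :: "complex \<Rightarrow> 'a::{real_normed_vector, banach} \<Rightarrow> 'a"
    and a :: "'a op" and \<gamma> :: real
  assumes "cplx_space sm" and "reflexive_space sm"
    and "is_op sm a" and "closure (odom a) = UNIV" and "positive_op a"
    and "\<gamma> > 0"
    and "\<forall>x\<in>odom a. Im (oapp a x x) = 0 \<and> Re (oapp a x x) \<ge> \<gamma> * (norm x)\<^sup>2"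
  shows "is_op sm (friedrichs sm a) \<and> positive_op (friedrichs sm a) \<and>
         self_adjoint sm (friedrichs sm a) \<and> extends (friedrichs sm a) a \<and>
         (\<forall>A. is_op sm A \<and> positive_op A \<and> self_adjoint sm A \<and> extends A a
              \<longrightarrow> op_ge (friedrichs sm a) A)"
proof -
  interpret fr sm a \<gamma>
    by unfold_locales (use assms in auto)
  show ?thesis using FF_is_op FF_positive FF_self_adjoint FF_extends FF_ge by blast
qed


end
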